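(* Consider the panel change point model \[ Y_{i,t}=\mu_i+\delta_i\,\mathbb{I}\{t>\tau\}+\sigma\varepsilon_{i,t},\qquad 1\le i\le N,\ 1\le t\le T, \] with $T\ge 4$ fixed (not depending on $N$), under the null hypothesis $H_0:\tau=T$ (no change), and suppose the error assumption stated in the context holds. Define \[ \mathcal{C}_N(T)=\frac{1}{\sqrt{N}}\max_{t=1,\ldots,T-1}\Big|\sum_{i=1}^N\sum_{s=1}^t\big(Y_{i,s}-\bar Y_{i,T}\big)\Big|, \] \[ \mathcal{R}_N(T)=\max_{t=2,\ldots,T-2}\frac{\max_{s=1,\ldots,t}\Big|\sum_{i=1}^N\sum_{r=1}^s\big(Y_{i,r}-\bar Y_{i,t}\big)\Big|}{\max_{s=t,\ldots,T-1}\Big|\sum_{i=1}^N\sum_{r=s+1}^T\big(Y_{i,r}-\tilde Y_{i,t}\big)\Big|}, \] where $\bar Y_{i,t}=\frac1t\sum_{s=1}^tY_{i,s}$ and $\tilde Y_{i,t}=\frac{1}{T-t}\sum_{s=t+1}^TY_{i,s}$. Then, as $N\to\infty$, \[ \mathcal{C}_N(T)\xrightarrow{\ \mathscr{D}\ }\sigma\max_{t=1,\ldots,T-1}\Big|X_t-\frac tT X_T\Big| \] and \[ \mathcal{R}_N(T)\xrightarrow{\ \mathscr{D}\ }\max_{t=2,\ldots,T-2}\frac{\max_{s=1,\ldots,t}\big|X_s-\frac st X_t\big|}{\max_{s=t,\ldots,T-1}\big|Z_s-\frac{T-s}{T-t}Z_t\big|}, \] where $Z_t:=X_T-X_t$ and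 $[X_1,\ldots,X_T]^\top$ is a multivariate normal random vector with zero mean and covariance matrix $\Lambda=\{\lambda_{t,v}\}_{t,v=1}^T$ given by $\lambda_{t,t}=r(t)$ and $\lambda_{t,v}=\lambda_{v,t}=r(t)+R(t,v)$ for $t<v$.
   Context: In the model, $\sigma>0$ is an unknown scale parameter, $\mu_i\in\mathbb{R}$ are panel-specific means, $\delta_i\in\mathbb{R}$ are panel-specific change sizes, and $\tau\in\{1,\ldots,T\}$ is the common change point ($\tau=T$ means no change). Error assumption: the random vectors $[\varepsilon_{i,1},\ldots,\varepsilon_{i,T}]^\top$, $i=1,\ldots,N$, defined on a probability space $(\Omega,\mathcal F,\mathsf P)$, are i.i.d. across $i$, with $\mathsf E\varepsilon_{i,t}=0$, $\mathsf{Var}\,\varepsilon_{i,t}=1$, and autocorrelation $\rho_t=\mathsf{Cov}(\varepsilon_{i,s},\varepsilon_{i,s+t})$ not depending on $s\in\{1,\ldots,T-t\}$ (with $\rho_{-t}=\rho_t$, $\rho_0=1$). The cumulative autocorrelation function is $r(t)=\mathsf{Var}\sum_{s=1}^t\varepsilon_{i,s}=\sum_{|s|<t}(t-|s|)\rho_s$, and the shifted cumulative correlation function is $R(t,v)=\mathsf{Cov}\big(\sum_{s=1}^t\varepsilon_{i,s},\sum_{u=t+1}^v\varepsilon_{i,u}\big)=\sum_{s=1}^t\sum_{u=t+1}^v\rho_{u-s}$ for $t<v$. *)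

theory Defs
  imports "HOL-Probability.Probability"
begin

definition cumr :: "(nat \<Rightarrow> real) \<Rightarrow> nat \<Rightarrow> real" where
  "cumr rho t = (\<Sum>s\<in>{-(int t)+1..int t - 1}. (real t - real_of_int \<bar>s\<bar>) * rho (nat \<bar>s\<bar>))"

definition shiftR :: "(nat \<Rightarrow> real) \<Rightarrow> nat \<Rightarrow> nat \<Rightarrow> real" where
  "shiftR rho t v = (\<Sum>s\<in>{1..t}. \<Sum>u\<in>{t+1..v}. rho (u - s))"

definition Lam :: "(nat \<Rightarrow> real) \<Rightarrow> nat \<Rightarrow> nat \<Rightarrow> real" where
  "Lam rho t v = (if t = v then cumr rho t
                  else if t < v then cumr rho t + shiftR rho t v
                  else cumr rho v + shiftR rho v t)"

text \<open>[X_1,...,X_T] is centred multivariate normal with covariance matrix L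
  (defined via the characteristic function, allowing singular L).\<close>
definition centered_mvnormal ::
  "'b measure \<Rightarrow> (nat \<Rightarrow> 'b \<Rightarrow> real) \<Rightarrow> nat \<Rightarrow> (nat \<Rightarrow> nat \<Rightarrow> real) \<Rightarrow> bool" where
  "centered_mvnormal P X T L \<longleftrightarrow>
     prob_space P \<and> (\<forall>t\<in>{1..T}. X t \<in> borel_measurable P) \<and>
     (\<forall>c :: nat \<Rightarrow> real.
        (CLINT \<omega>|P. iexp (\<Sum>t\<in>{1..T}. c t * X t \<omega>)) =
        complex_of_real (exp (- (\<Sum>t\<in>{1..T}. \<Sum>v\<in>{1..T}. c t * c v * L t v) / 2)))"

definition panelY ::
  "(nat \<Rightarrow> real) \<Rightarrow> (nat \<Rightarrow> real) \<Rightarrow> nat \<Rightarrow> real \<Rightarrow> (nat \<Rightarrow> nat \<Rightarrow> 'a \<Rightarrow> real)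
   \<Rightarrow> nat \<Rightarrow> nat \<Rightarrow> 'a \<Rightarrow> real" where
  "panelY mu delta tau sig eps i t \<omega> =
     mu i + delta i * (if t > tau then 1 else 0) + sig * eps i t \<omega>"

definition Ybar :: "(nat \<Rightarrow> nat \<Rightarrow> 'a \<Rightarrow> real) \<Rightarrow> nat \<Rightarrow> nat \<Rightarrow> 'a \<Rightarrow> real" where
  "Ybar Y i t \<omega> = (1 / real t) * (\<Sum>s\<in>{1..t}. Y i s \<omega>)"

definition Ytil :: "nat \<Rightarrow> (nat \<Rightarrow> nat \<Rightarrow> 'a \<Rightarrow> real) \<Rightarrow> nat \<Rightarrow> nat \<Rightarrow> 'a \<Rightarrow> real" where
  "Ytil T Y i t \<omega> = (1 / (real T - real t)) * (\<Sum>s\<in>{t+1..T}. Y i s \<omega>)"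

definition statC :: "nat \<Rightarrow> (nat \<Rightarrow> nat \<Rightarrow> 'a \<Rightarrow> real) \<Rightarrow> nat \<Rightarrow> 'a \<Rightarrow> real" where
  "statC T Y N \<omega> = (1 / sqrt (real N)) *
     Max ((\<lambda>t. \<bar>\<Sum>i\<in>{1..N}. \<Sum>s\<in>{1..t}. (Y i s \<omega> - Ybar Y i T \<omega>)\<bar>) ` {1..T-1})"

definition statR :: "nat \<Rightarrow> (nat \<Rightarrow> nat \<Rightarrow> 'a \<Rightarrow> real) \<Rightarrow> nat \<Rightarrow> 'a \<Rightarrow> real" where
  "statR T Y N \<omega> = Max ((\<lambda>t.
       Max ((\<lambda>s. \<bar>\<Sum>i\<in>{1..N}. \<Sum>r\<in>{1..s}. (Y i r \<omega> - Ybar Y i t \<omega>)\<bar>) ` {1..t}) /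
       Max ((\<lambda>s. \<bar>\<Sum>i\<in>{1..N}. \<Sum>r\<in>{s+1..T}. (Y i r \<omega> - Ytil T Y i t \<omega>)\<bar>) ` {t..T-1}))
     ` {2..T-2})"

definition limC :: "nat \<Rightarrow> real \<Rightarrow> (nat \<Rightarrow> 'b \<Rightarrow> real) \<Rightarrow> 'b \<Rightarrow> real" where
  "limC T sig X \<omega> = sig * Max ((\<lambda>t. \<bar>X t \<omega> - real t / real T * X T \<omega>\<bar>) ` {1..T-1})"

definition limR :: "nat \<Rightarrow> (nat \<Rightarrow> 'b \<Rightarrow> real) \<Rightarrow> 'b \<Rightarrow> real" where
  "limR T X \<omega> = (let Z = (\<lambda>t. X T \<omega> - X t \<omega>) in
     Max ((\<lambda>t.
       Max ((\<lambda>s. \<bar>X s \<omega> - real s / real t * X t \<omega>\<bar>) ` {1..t}) /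
       Max ((\<lambda>s. \<bar>Z s - (real T - real s) / (real T - real t) * Z t\<bar>) ` {t..T-1}))
     ` {2..T-2}))"

end

theory Submission
  imports Defs "HOL-Probability.Probability"
begin

definition psi :: "real \<Rightarrow> real" where "psi y = max 0 (min 1 (2 - \<bar>y\<bar>))"

lemma psi_ge0: "0 \<le> psi y" and psi_le1: "psi y \<le> 1"
  by (auto simp: psi_def)

lemma psi_one: "\<bar>y\<bar> \<le> 1 \<Longrightarrow> psi y = 1" by (auto simp: psi_def)
lemma psi_zero: "\<bar>y\<bar> \<ge> 2 \<Longrightarrow> psi y = 0" by (auto simp: psi_def)

lemma continuous_psi: "continuous_on UNIV psi"
  unfolding psi_def by (intro continuous_intros)

lemma isCont_psi: "isCont psi x"
  using continuous_psi by (simp add: continuous_on_eq_continuous_at)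

lemma one_minus_prod_le:
  fixes a :: "'i \<Rightarrow> real"
  assumes "finite I" "\<And>i. i \<in> I \<Longrightarrow> 0 \<le> a i \<and> a i \<le> 1"
  shows "1 - prod a I \<le> (\<Sum>i\<in>I. 1 - a i)"
  using assms
proof (induction I rule: finite_induct)
  case empty then show ?case by simp
next
  case (insert i F)
  have p: "0 \<le> prod a F" "prod a F \<le> 1"
    using insert by (auto intro: prod_nonneg prod_le_1)
  have ai: "0 \<le> a i" "a i \<le> 1" using insert by auto
  have "1 - prod a (insert i F) = 1 - a i * prod a F" using insert by simp
  also have "\<dots> \<le> (1 - a i) + (1 - prod a F)"
  proof -
    have "0 \<le> (1 - a i) * (1 - prod a F)" using p ai by simp
    then show ?thesis by (simp add: algebra_simps)
  qed
  also have "\<dots> \<le> (1 - a i) + (\<Sum>j\<in>F. 1 - a j)" using insert by auto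
  finally show ?case using insert by simp
qed

inductive Qx :: "nat set \<Rightarrow> ((nat \<Rightarrow> real) \<Rightarrow> complex) \<Rightarrow> bool" for I where
  Qexp: "Qx I (\<lambda>x. iexp (\<Sum>t\<in>I. c t * x t))"
| Qadd: "Qx I f \<Longrightarrow> Qx I g \<Longrightarrow> Qx I (\<lambda>x. f x + g x)"
| Qsmult: "Qx I f \<Longrightarrow> Qx I (\<lambda>x. a * f x)"

lemma Qx_const: "Qx I (\<lambda>x. a)"
  using Qsmult[OF Qexp[of I "\<lambda>_. 0"], of a] by simp

lemma Qx_exp_mult:
  assumes "Qx I g"
  shows "Qx I (\<lambda>x. iexp (\<Sum>t\<in>I. c t * x t) * g x)"
  using assms
proof induction
  case (Qexp d)
  have "(\<lambda>x. iexp (\<Sum>t\<in>I. c t * x t) * iexp (\<Sum>t\<in>I. d t * x t)) =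
        (\<lambda>x. iexp (\<Sum>t\<in>I. (c t + d t) * x t))"
    by (auto simp: exp_add[symmetric] distrib_right sum.distrib algebra_simps)
  then show ?case using Qx.Qexp by metis
next
  case (Qadd f g)
  then show ?case using Qx.Qadd[OF Qadd.IH] by (simp add: distrib_left)
next
  case (Qsmult f a)
  then show ?case using Qx.Qsmult[OF Qsmult.IH, of a] by (simp add: algebra_simps)
qed

lemma Qx_mult:
  assumes "Qx I f" "Qx I g"
  shows "Qx I (\<lambda>x. f x * g x)"
  using assms(1)
proof induction
  case (Qexp c) then show ?case using Qx_exp_mult[OF assms(2)] by simp
next
  case (Qadd f1 f2) then show ?case using Qx.Qadd by (simp add: distrib_right)
next
  case (Qsmult f a) then show ?case using Qx.Qsmult[OF Qsmult.IH, of a] by (simp add: algebra_simps)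
qed

lemma Qx_cont: "Qx I f \<Longrightarrow> continuous_on UNIV f"
proof (induction rule: Qx.induct)
  case (Qexp c)
  show ?case by (intro continuous_intros continuous_on_product_then_coordinatewise continuous_on_id)
qed (auto intro: continuous_intros)

lemma Qx_bdd: "Qx I f \<Longrightarrow> \<exists>B. \<forall>x. norm (f x) \<le> B"
proof (induction rule: Qx.induct)
  case (Qexp c) then show ?case by (intro exI[of _ 1]) (simp add: norm_exp_i_times)
next
  case (Qadd f g)
  then obtain B1 B2 where "\<forall>x. norm (f x) \<le> B1" "\<forall>x. norm (g x) \<le> B2" by blast
  then show ?case by (intro exI[of _ "B1+B2"]) (metis add_mono norm_triangle_le)
next
  case (Qsmult f a)
  then obtain B1 where "\<forall>x. norm (f x) \<le> B1" by blast
  then show ?case by (intro exI[of _ "norm a * B1"]) (auto simp: norm_mult intro: mult_left_mono)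
qed


lemma Qx_integrable:
  assumes "prob_space M" "W \<in> borel_measurable M" "Qx I f"
  shows "integrable M (\<lambda>\<omega>. f (W \<omega>))"
proof -
  interpret prob_space M by fact
  obtain B where B: "\<forall>x. norm (f x) \<le> B" using Qx_bdd[OF assms(3)] by blast
  have "f \<in> borel_measurable borel"
    by (rule borel_measurable_continuous_onI[OF Qx_cont[OF assms(3)]])
  then have "(\<lambda>\<omega>. f (W \<omega>)) \<in> borel_measurable M"
    using assms(2) by (rule measurable_compose[rotated])
  then show ?thesis
    by (intro integrable_const_bound[where B=B]) (use B in auto)
qed

lemma Qx_conv:
  fixes V :: "nat \<Rightarrow> 'a \<Rightarrow> nat \<Rightarrow> real" and G :: "'b \<Rightarrow> nat \<Rightarrow> real"
  assumes M: "prob_space M" and P: "prob_space P"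
  and Vm: "\<And>N. V N \<in> borel_measurable M" and Gm: "G \<in> borel_measurable P"
  and ch: "\<And>c. (\<lambda>N. CLINT \<omega>|M. iexp (\<Sum>t\<in>I. c t * V N \<omega> t)) \<longlonglongrightarrow> (CLINT \<omega>|P. iexp (\<Sum>t\<in>I. c t * G \<omega> t))"
  and Q: "Qx I f"
  shows "(\<lambda>N. CLINT \<omega>|M. f (V N \<omega>)) \<longlonglongrightarrow> (CLINT \<omega>|P. f (G \<omega>))"
  using Q
proof induction
  case (Qexp c) then show ?case using ch by simp
next
  case (Qadd f g)
  have "(\<lambda>N. (CLINT \<omega>|M. f (V N \<omega>)) + (CLINT \<omega>|M. g (V N \<omega>))) \<longlonglongrightarrow>
        (CLINT \<omega>|P. f (G \<omega>)) + (CLINT \<omega>|P. g (G \<omega>))"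
    using Qadd.IH by (rule tendsto_add)
  moreover have "(CLINT \<omega>|M. f (V N \<omega>) + g (V N \<omega>)) = (CLINT \<omega>|M. f (V N \<omega>)) + (CLINT \<omega>|M. g (V N \<omega>))" for N
    using Qx_integrable[OF M Vm] Qadd.hyps by (intro Bochner_Integration.integral_add) auto
  moreover have "(CLINT \<omega>|P. f (G \<omega>) + g (G \<omega>)) = (CLINT \<omega>|P. f (G \<omega>)) + (CLINT \<omega>|P. g (G \<omega>))"
    using Qx_integrable[OF P Gm] Qadd.hyps by (intro Bochner_Integration.integral_add) auto
  ultimately show ?case by simp
next
  case (Qsmult f a)
  then show ?case by (simp add: tendsto_mult_left)
qed

inductive tp :: "((nat \<Rightarrow> complex) \<Rightarrow> real) \<Rightarrow> bool" where
  tconst: "tp (\<lambda>_. c)"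
| tre: "tp (\<lambda>u. Re (u t))"
| tim: "tp (\<lambda>u. Im (u t))"
| tadd: "tp f \<Longrightarrow> tp g \<Longrightarrow> tp (\<lambda>x. f x + g x)"
| tmult: "tp f \<Longrightarrow> tp g \<Longrightarrow> tp (\<lambda>x. f x * g x)"

definition theta :: "real \<Rightarrow> nat set \<Rightarrow> (nat \<Rightarrow> real) \<Rightarrow> nat \<Rightarrow> complex" where
  "theta w I x = (\<lambda>t. if t \<in> I then iexp (w * x t) else 1)"

lemma sum_single_coord:
  assumes "finite I" "t \<in> I"
  shows "(\<Sum>s\<in>I. (if s = t then w else 0) * x s) = w * (x t :: real)"
proof -
  have "(\<Sum>s\<in>I. (if s = t then w else 0) * x s) = (\<Sum>s\<in>I. if s = t then w * x s else 0)"
    by (intro sum.cong) auto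
  also have "\<dots> = w * x t" using assms by simp
  finally show ?thesis .
qed

lemma cos_iexp: "complex_of_real (cos a) = iexp a / 2 + iexp (- a) / 2"
  by (simp only: cis_conv_exp[symmetric]) (simp add: complex_eq_iff)

lemma sin_iexp: "complex_of_real (sin a) = (- \<i> / 2) * iexp a + (\<i> / 2) * iexp (- a)"
  by (simp only: cis_conv_exp[symmetric]) (simp add: complex_eq_iff)

lemma Re_iexp: "Re (iexp a) = cos a"
  by (simp only: cis_conv_exp[symmetric]) simp
lemma Im_iexp: "Im (iexp a) = sin a"
  by (simp only: cis_conv_exp[symmetric]) simp

lemma Qx_coord_exp:
  assumes "finite I" "t \<in> I"
  shows "Qx I (\<lambda>x. iexp (a * x t))"
  using Qexp[of I "\<lambda>s. if s = t then a else 0"] sum_single_coord[OF assms] by simp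

lemma tp_Qx:
  assumes "finite I" "tp p"
  shows "Qx I (\<lambda>x. complex_of_real (p (theta w I x)))"
  using assms(2)
proof induction
  case (tconst c) then show ?case by (rule Qx_const)
next
  case (tre t)
  show ?case
  proof (cases "t \<in> I")
    case True
    have "Qx I (\<lambda>x. (1/2) * iexp (w * x t) + (1/2) * iexp ((- w) * x t))"
      by (intro Qadd Qsmult Qx_coord_exp assms True)
    moreover have "complex_of_real (Re (theta w I x t)) = (1/2) * iexp (w * x t) + (1/2) * iexp ((- w) * x t)" for x
    proof -
      have "theta w I x t = iexp (w * x t)" using True by (simp add: theta_def)
      then show ?thesis by (simp only: Re_iexp cos_iexp) simp
    qed
    ultimately show ?thesis by simp
  next
    case False then show ?thesis by (simp add: theta_def Qx_const)
  qed
next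
  case (tim t)
  show ?case
  proof (cases "t \<in> I")
    case True
    have "Qx I (\<lambda>x. (- \<i> / 2) * iexp (w * x t) + (\<i> / 2) * iexp ((- w) * x t))"
      by (intro Qadd Qsmult Qx_coord_exp assms True)
    moreover have "complex_of_real (Im (theta w I x t)) = (- \<i> / 2) * iexp (w * x t) + (\<i> / 2) * iexp ((- w) * x t)" for x
    proof -
      have "theta w I x t = iexp (w * x t)" using True by (simp add: theta_def)
      then show ?thesis by (simp only: Im_iexp sin_iexp) simp
    qed
    ultimately show ?thesis by simp
  next
    case False then show ?thesis by (simp add: theta_def Qx_const)
  qed
next
  case (tadd f g) then show ?case by (simp add: Qadd)
next
  case (tmult f g) then show ?case by (simp add: Qx_mult)
qed

lemma coord_cont: "continuous_on UNIV (\<lambda>x::nat \<Rightarrow> 'b::topological_space. x t)"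
  using continuous_on_product_then_coordinatewise[OF continuous_on_id, of UNIV t] by simp

lemma tp_cont: "tp p \<Longrightarrow> continuous_on UNIV p"
proof (induction rule: tp.induct)
  case (tconst c) show ?case by (rule continuous_on_const)
next
  case (tre t) show ?case by (rule continuous_on_Re[OF coord_cont])
next
  case (tim t) show ?case by (rule continuous_on_Im[OF coord_cont])
next
  case (tadd f g) then show ?case by (intro continuous_on_add) auto
next
  case (tmult f g) then show ?case by (intro continuous_on_mult) auto
qed


definition torus :: "nat set \<Rightarrow> (nat \<Rightarrow> complex) set" where
  "torus I = PiE UNIV (\<lambda>t. if t \<in> I then sphere 0 1 else {1})"

lemma compact_torus: "compact (torus I)"
proof -
  have "compactin (product_topology (\<lambda>i. euclidean) UNIV) (torus I)"
    unfolding torus_def compactin_PiE by (auto simp: compact_sphere)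
  then show ?thesis by (simp add: euclidean_product_topology)
qed

lemma torus_iff: "u \<in> torus I \<longleftrightarrow> (\<forall>t. if t \<in> I then norm (u t) = 1 else u t = 1)"
  unfolding torus_def by (auto simp: PiE_iff)

lemma theta_torus: "theta w I x \<in> torus I"
  by (auto simp: torus_iff theta_def norm_exp_i_times)

lemma tp_sep:
  assumes "u \<noteq> v" shows "\<exists>f. tp f \<and> f u \<noteq> f v"
proof -
  obtain t where "u t \<noteq> v t" using assms by blast
  then have "Re (u t) \<noteq> Re (v t) \<or> Im (u t) \<noteq> Im (v t)" by (simp add: complex_eq_iff)
  then show ?thesis using tre[of t] tim[of t] by blast
qed

lemma SW_tp:
  assumes "continuous_on (torus I) F" "e > 0"
  shows "\<exists>p. tp p \<and> (\<forall>u\<in>torus I. \<bar>F u - p u\<bar> < e)"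
  by (rule Stone_Weierstrass_HOL[OF compact_torus])
     (use assms tp_sep in \<open>auto intro: tconst tadd tmult continuous_on_subset[OF tp_cont]\<close>)

lemma abs_Arg_gt:
  assumes "norm z = 1" "Re z < 0"
  shows "\<bar>Arg z\<bar> > pi / 2"
proof (rule ccontr)
  assume "\<not> ?thesis"
  then have "cos (Arg z) \<ge> 0" by (intro cos_ge_zero) auto
  moreover have "z = exp (\<i> * Arg z)" using assms(1) complex_norm_eq_1_exp_eq by auto
  then have "Re z = cos (Arg z)"
    by (metis Re_iexp)
  ultimately show False using assms by simp
qed

lemma Arg_iexp:
  assumes "- pi < a" "a \<le> pi"
  shows "Arg (iexp a) = a"
  using Arg_unique[of 1 a "iexp a"] assms by simp

lemma open_coord: "open S \<Longrightarrow> open {v :: nat \<Rightarrow> 'b::topological_space. v t \<in> S}"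
  using product_topology_basis'[of "{t}" "\<lambda>_. S" "\<lambda>_. t"] by simp

lemma open_coords: "finite I \<Longrightarrow> open S \<Longrightarrow> open {v :: nat \<Rightarrow> 'b::topological_space. \<forall>t\<in>I. v t \<in> S}"
  using product_topology_basis'[of I "\<lambda>_. S" "\<lambda>t. t"] by simp


definition Phi :: "nat set \<Rightarrow> real \<Rightarrow> (nat \<Rightarrow> real) \<Rightarrow> real" where
  "Phi I K x = (\<Prod>t\<in>I. psi (x t / K))"

definition Aang :: "nat set \<Rightarrow> real \<Rightarrow> (nat \<Rightarrow> complex) \<Rightarrow> nat \<Rightarrow> real" where
  "Aang I w u = (\<lambda>t. if t \<in> I then Arg (u t) / w else 0)"

lemma Phi_cont: "continuous_on UNIV (Phi I K)"
proof -
  have "continuous_on UNIV (\<lambda>x::nat\<Rightarrow>real. x t / K)" for t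
    using continuous_on_mult_right[OF coord_cont[of t], of "inverse K"] by (simp add: divide_inverse)
  then have "continuous_on UNIV (\<lambda>x::nat\<Rightarrow>real. psi (x t / K))" for t
    by (rule continuous_on_compose2[OF continuous_psi]) auto
  then show ?thesis unfolding Phi_def by (intro continuous_on_prod) auto
qed

lemma Phi_bounds: "finite I \<Longrightarrow> 0 \<le> Phi I K x \<and> Phi I K x \<le> 1"
  unfolding Phi_def by (auto intro: prod_nonneg prod_le_1 psi_ge0 psi_le1)

lemma F0_cont:
  assumes I: "finite I" and K: "K > 0" and hc: "continuous_on UNIV h"
  defines "w \<equiv> pi / (4*K)"
  shows "continuous_on (torus I) (\<lambda>u. h (Aang I w u) * Phi I K (Aang I w u))"
    (is "continuous_on _ ?F")
proof -
  have w: "w > 0" unfolding w_def using K by simp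
  have "continuous (at u within torus I) ?F" if u: "u \<in> torus I" for u
  proof (cases "\<forall>t\<in>I. u t \<notin> \<real>\<^sub>\<le>\<^sub>0")
    case True
    define U where "U = {v :: nat \<Rightarrow> complex. \<forall>t\<in>I. v t \<in> - \<real>\<^sub>\<le>\<^sub>0}"
    have oU: "open U" unfolding U_def by (rule open_coords[OF I]) auto
    have uU: "u \<in> U" using True by (auto simp: U_def)
    have cA: "continuous_on U (Aang I w)"
    proof (rule continuous_on_coordinatewise_then_product)
      fix t
      show "continuous_on U (\<lambda>x. Aang I w x t)"
      proof (cases "t \<in> I")
        case True
        have "continuous_on U (\<lambda>v. Arg (v t))"
          by (rule continuous_on_compose2[OF continuous_on_Arg])
             (use True in \<open>auto simp: U_def intro: continuous_on_product_then_coordinatewise continuous_on_id\<close>)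
        from continuous_on_mult_right[OF this, of "inverse w"] show ?thesis using True by (simp add: Aang_def divide_inverse)
      next
        case False then show ?thesis by (simp add: Aang_def)
      qed
    qed
    have "continuous_on U ?F"
    proof -
      have "continuous_on U (\<lambda>u. h (Aang I w u))" by (rule continuous_on_compose2[OF hc cA]) auto
      moreover have "continuous_on U (\<lambda>u. Phi I K (Aang I w u))" by (rule continuous_on_compose2[OF Phi_cont cA]) auto
      ultimately show ?thesis by (rule continuous_on_mult)
    qed
    then have "continuous (at u) ?F" using oU uU continuous_on_eq_continuous_at by blast
    then show ?thesis by (rule continuous_at_imp_continuous_at_within)
  next
    case False
    then obtain t0 where t0: "t0 \<in> I" "u t0 \<in> \<real>\<^sub>\<le>\<^sub>0" by blast
    have n1: "norm (u t0) = 1" using u t0 by (auto simp: torus_iff split: if_splits)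
    obtain r where r: "u t0 = of_real r" "r \<le> 0" using t0(2) nonpos_Reals_cases by blast
    have "Re (u t0) < 0" using n1 r by auto
    define W where "W = {v :: nat \<Rightarrow> complex. v t0 \<in> {z. Re z < 0}}"
    have oW: "open W" unfolding W_def by (intro open_coord open_halfspace_Re_lt)
    have uW: "u \<in> W" using \<open>Re (u t0) < 0\<close> by (simp add: W_def)
    have zero: "?F v = 0" if "v \<in> W" "v \<in> torus I" for v
    proof -
      have "norm (v t0) = 1" using that t0 by (auto simp: torus_iff split: if_splits)
      moreover have "Re (v t0) < 0" using that by (simp add: W_def)
      ultimately have a: "\<bar>Arg (v t0)\<bar> > pi / 2" by (rule abs_Arg_gt)
      have "\<bar>Aang I w v t0 / K\<bar> = \<bar>Arg (v t0)\<bar> * (4 / pi)"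
        using t0 K by (simp add: Aang_def w_def abs_divide abs_mult field_simps)
      also have "\<dots> > (pi / 2) * (4 / pi)" using a by (intro mult_strict_right_mono) auto
      finally have "\<bar>Aang I w v t0 / K\<bar> \<ge> 2" by simp
      then have "psi (Aang I w v t0 / K) = 0" by (rule psi_zero)
      then have "Phi I K (Aang I w v) = 0" unfolding Phi_def using I t0 by (intro prod_zero) auto
      then show ?thesis by simp
    qed
    have ev: "eventually (\<lambda>v. ?F v = 0) (at u within torus I)"
      unfolding eventually_at_topological using oW uW zero by blast
    have "(?F \<longlongrightarrow> 0) (at u within torus I)" by (rule tendsto_eventually[OF ev])
    moreover have "?F u = 0" using zero uW u by blast
    ultimately show ?thesis unfolding continuous_within by metis
  qed
  then show ?thesis using continuous_on_eq_continuous_within by blast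
qed


lemma psi_meas[measurable]: "psi \<in> borel_measurable borel"
  by (rule borel_measurable_continuous_onI[OF continuous_psi])

lemma key_bound:
  assumes I: "finite I" and K: "K > 0" and hb: "\<And>x. \<bar>h x\<bar> \<le> B"
  and xs: "\<And>t. t \<notin> I \<Longrightarrow> x t = 0"
  defines "w \<equiv> pi / (4*K)"
  shows "\<bar>h x - h (Aang I w (theta w I x)) * Phi I K (Aang I w (theta w I x))\<bar> \<le> 2*B*(1 - Phi I K x)"
proof -
  have B0: "0 \<le> B" using hb[of x] by linarith
  have w: "w > 0" unfolding w_def using K by simp
  show ?thesis
  proof (cases "\<forall>t\<in>I. \<bar>x t\<bar> < 4*K")
    case True
    have "Aang I w (theta w I x) = x"
    proof
      fix t show "Aang I w (theta w I x) t = x t"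
      proof (cases "t \<in> I")
        case tI: True
        have "\<bar>w * x t\<bar> < pi"
        proof -
          have "\<bar>w * x t\<bar> = w * \<bar>x t\<bar>" using w by (simp add: abs_mult)
          also have "\<dots> < w * (4*K)" using True tI w by (intro mult_strict_left_mono) auto
          also have "\<dots> = pi" using K by (simp add: w_def)
          finally show ?thesis .
        qed
        then have "Arg (iexp (w * x t)) = w * x t" by (intro Arg_iexp) auto
        then show ?thesis using tI w by (simp add: Aang_def theta_def)
      next
        case False then show ?thesis by (simp add: Aang_def xs)
      qed
    qed
    then have "\<bar>h x - h (Aang I w (theta w I x)) * Phi I K (Aang I w (theta w I x))\<bar> = \<bar>h x\<bar> * (1 - Phi I K x)"
    proof -
      have "h x - h x * Phi I K x = h x * (1 - Phi I K x)" by (simp add: algebra_simps)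
      then show ?thesis using \<open>Aang I w (theta w I x) = x\<close> Phi_bounds[OF I, of K x] by (simp add: abs_mult)
    qed
    also have "\<dots> \<le> B * (1 - Phi I K x)" using hb[of x] Phi_bounds[OF I, of K x] by (intro mult_right_mono) auto
    also have "\<dots> \<le> 2 * B * (1 - Phi I K x)" using B0 Phi_bounds[OF I, of K x] by (simp add: mult_right_mono)
    finally show ?thesis .
  next
    case False
    then obtain t where t: "t \<in> I" "\<bar>x t\<bar> \<ge> 4*K" by auto
    have "\<bar>x t / K\<bar> \<ge> 2" using t K by (simp add: abs_divide field_simps)
    then have "psi (x t / K) = 0" by (rule psi_zero)
    then have P0: "Phi I K x = 0" unfolding Phi_def using I t by (intro prod_zero) auto
    have "\<bar>h x - h (Aang I w (theta w I x)) * Phi I K (Aang I w (theta w I x))\<bar>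
          \<le> \<bar>h x\<bar> + \<bar>h (Aang I w (theta w I x))\<bar> * \<bar>Phi I K (Aang I w (theta w I x))\<bar>"
      by (simp add: abs_mult[symmetric] abs_triangle_ineq4)
    also have "\<dots> \<le> B + B * 1"
      using hb Phi_bounds[OF I] B0 by (intro add_mono mult_mono) auto
    finally show ?thesis using P0 by simp
  qed
qed

lemma tight_conv:
  fixes V :: "nat \<Rightarrow> 'a \<Rightarrow> nat \<Rightarrow> real" and G :: "'b \<Rightarrow> nat \<Rightarrow> real" and f :: "real \<Rightarrow> real"
  assumes M: "prob_space M" and P: "prob_space P" and I: "finite I" "t \<in> I"
  and Vm: "\<And>N. V N \<in> borel_measurable M" and Gm: "G \<in> borel_measurable P"
  and ch: "\<And>c. (\<lambda>N. CLINT \<omega>|M. iexp (\<Sum>t\<in>I. c t * V N \<omega> t)) \<longlonglongrightarrow> (CLINT \<omega>|P. iexp (\<Sum>t\<in>I. c t * G \<omega> t))"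
  and fc: "\<And>x. isCont f x" and fb: "\<And>x. \<bar>f x\<bar> \<le> Bf"
  shows "(\<lambda>N. \<integral>\<omega>. f (V N \<omega> t) \<partial>M) \<longlonglongrightarrow> (\<integral>\<omega>. f (G \<omega> t) \<partial>P)"
proof -
  interpret M: prob_space M by fact
  interpret P: prob_space P by fact
  have rvV[measurable]: "(\<lambda>\<omega>. V N \<omega> t) \<in> borel_measurable M" for N
    by (rule measurable_product_then_coordinatewise[OF Vm])
  have rvG[measurable]: "(\<lambda>\<omega>. G \<omega> t) \<in> borel_measurable P"
    by (rule measurable_product_then_coordinatewise[OF Gm])
  define \<mu> where "\<mu> N = distr M borel (\<lambda>\<omega>. V N \<omega> t)" for N
  define \<nu> where "\<nu> = distr P borel (\<lambda>\<omega>. G \<omega> t)"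
  have rd: "real_distribution (\<mu> N)" for N unfolding \<mu>_def by simp
  have rd': "real_distribution \<nu>" unfolding \<nu>_def by simp
  have cM: "char (\<mu> N) s = (CLINT \<omega>|M. iexp (\<Sum>t'\<in>I. (if t' = t then s else 0) * V N \<omega> t'))" for N s
    unfolding \<mu>_def char_def using sum_single_coord[OF I] by (simp add: integral_distr)
  have cP: "char \<nu> s = (CLINT \<omega>|P. iexp (\<Sum>t'\<in>I. (if t' = t then s else 0) * G \<omega> t'))" for s
    unfolding \<nu>_def char_def using sum_single_coord[OF I] by (simp add: integral_distr)
  have "weak_conv_m \<mu> \<nu>"
    by (rule levy_continuity[OF rd rd']) (simp only: cM cP ch)
  then have "(\<lambda>N. integral\<^sup>L (\<mu> N) f) \<longlonglongrightarrow> integral\<^sup>L \<nu> f"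
    by (intro weak_conv_imp_integral_bdd_continuous_conv[OF rd rd', where B=Bf]) (use fc fb in auto)
  moreover have fm: "f \<in> borel_measurable borel"
    by (intro borel_measurable_continuous_onI continuous_at_imp_continuous_on) (use fc in auto)
  ultimately show ?thesis unfolding \<mu>_def \<nu>_def using fm by (simp add: integral_distr)
qed

lemma tail_to0:
  assumes P: "prob_space P" and Ym: "Y \<in> borel_measurable P"
  shows "(\<lambda>n. \<integral>\<omega>. 1 - psi (Y \<omega> / real (Suc n)) \<partial>P) \<longlonglongrightarrow> 0"
proof -
  interpret P: prob_space P by fact
  have "(\<lambda>n. \<integral>\<omega>. 1 - psi (Y \<omega> / real (Suc n)) \<partial>P) \<longlonglongrightarrow> (\<integral>\<omega>. 0 \<partial>P)"
  proof (rule integral_dominated_convergence[where w="\<lambda>_. 1"])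
    show "AE x in P. (\<lambda>n. 1 - psi (Y x / real (Suc n))) \<longlonglongrightarrow> 0"
    proof (rule AE_I2)
      fix x
      have "eventually (\<lambda>n. 1 - psi (Y x / real (Suc n)) = 0) sequentially"
      proof (rule eventually_sequentiallyI[of "nat \<lceil>\<bar>Y x\<bar>\<rceil>"])
        fix n assume "nat \<lceil>\<bar>Y x\<bar>\<rceil> \<le> n"
        then have "\<bar>Y x\<bar> \<le> real (Suc n)" by linarith
        then have "\<bar>Y x / real (Suc n)\<bar> \<le> 1" by (simp add: abs_divide field_simps)
        then show "1 - psi (Y x / real (Suc n)) = 0" by (simp add: psi_one)
      qed
      then show "(\<lambda>n. 1 - psi (Y x / real (Suc n))) \<longlonglongrightarrow> 0" by (rule tendsto_eventually)
    qed
    show "AE x in P. norm (1 - psi (Y x / real (Suc n))) \<le> 1" for n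
      using psi_ge0 psi_le1 by (intro AE_I2) (simp add: abs_le_iff)
  qed (use Ym in auto)
  then show ?thesis by simp
qed


lemma bc_integrable:
  fixes f :: "(nat \<Rightarrow> real) \<Rightarrow> real"
  assumes "prob_space M" "W \<in> borel_measurable M" "continuous_on UNIV f" "\<And>x. \<bar>f x\<bar> \<le> B"
  shows "integrable M (\<lambda>\<omega>. f (W \<omega>))"
proof -
  interpret prob_space M by fact
  have "f \<in> borel_measurable borel" by (rule borel_measurable_continuous_onI[OF assms(3)])
  then have "(\<lambda>\<omega>. f (W \<omega>)) \<in> borel_measurable M"
    using assms(2) by (rule measurable_compose[rotated])
  then show ?thesis
    by (intro integrable_const_bound[where B=B]) (use assms(4) in auto)
qed

lemma psi_coord_integrable:
  assumes "prob_space M" "W \<in> borel_measurable M"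
  shows "integrable M (\<lambda>\<omega>. 1 - psi (W \<omega> t / K))"
proof -
  interpret prob_space M by fact
  have [measurable]: "(\<lambda>\<omega>. W \<omega> t) \<in> borel_measurable M"
    by (rule measurable_product_then_coordinatewise[OF assms(2)])
  show ?thesis
    by (intro integrable_const_bound[where B=1]) (use psi_ge0 psi_le1 in auto)
qed

lemma approx_bound:
  fixes h q :: "(nat \<Rightarrow> real) \<Rightarrow> real" and W :: "'a \<Rightarrow> nat \<Rightarrow> real"
  assumes Q: "prob_space Q" and Wm: "W \<in> borel_measurable Q" and I: "finite I"
  and Ws: "\<And>\<omega> t. t \<notin> I \<Longrightarrow> W \<omega> t = 0"
  and hi: "integrable Q (\<lambda>\<omega>. h (W \<omega>))" and qi: "integrable Q (\<lambda>\<omega>. q (W \<omega>))"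
  and key: "\<And>x. (\<And>t. t \<notin> I \<Longrightarrow> x t = 0) \<Longrightarrow> \<bar>h x - q x\<bar> \<le> e + 2*B*(\<Sum>t\<in>I. 1 - psi (x t / K))"
  shows "\<bar>(\<integral>\<omega>. h (W \<omega>) \<partial>Q) - (\<integral>\<omega>. q (W \<omega>) \<partial>Q)\<bar> \<le> e + 2*B*(\<Sum>t\<in>I. \<integral>\<omega>. 1 - psi (W \<omega> t / K) \<partial>Q)"
proof -
  interpret prob_space Q by fact
  have pi: "integrable Q (\<lambda>\<omega>. 1 - psi (W \<omega> t / K))" for t
    by (rule psi_coord_integrable[OF Q Wm])
  have si: "integrable Q (\<lambda>\<omega>. \<Sum>t\<in>I. 1 - psi (W \<omega> t / K))"
    using pi by (intro Bochner_Integration.integrable_sum) auto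
  have ri: "integrable Q (\<lambda>\<omega>. e + 2*B*(\<Sum>t\<in>I. 1 - psi (W \<omega> t / K)))"
    using si by (intro Bochner_Integration.integrable_add integrable_mult_right) auto
  have "\<bar>(\<integral>\<omega>. h (W \<omega>) \<partial>Q) - (\<integral>\<omega>. q (W \<omega>) \<partial>Q)\<bar> = \<bar>\<integral>\<omega>. h (W \<omega>) - q (W \<omega>) \<partial>Q\<bar>"
    using hi qi by (simp add: Bochner_Integration.integral_diff)
  also have "\<dots> \<le> (\<integral>\<omega>. \<bar>h (W \<omega>) - q (W \<omega>)\<bar> \<partial>Q)"
    by (rule integral_abs_bound)
  also have "\<dots> \<le> (\<integral>\<omega>. e + 2*B*(\<Sum>t\<in>I. 1 - psi (W \<omega> t / K)) \<partial>Q)"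
    by (rule integral_mono[OF _ ri]) (use hi qi key Ws in auto)
  also have "\<dots> = e + 2*B*(\<Sum>t\<in>I. \<integral>\<omega>. 1 - psi (W \<omega> t / K) \<partial>Q)"
    using si pi by (simp add: Bochner_Integration.integral_add Bochner_Integration.integral_sum prob_space)
  finally show ?thesis .
qed


theorem MV:
  fixes V :: "nat \<Rightarrow> 'a \<Rightarrow> nat \<Rightarrow> real" and G :: "'b \<Rightarrow> nat \<Rightarrow> real" and h :: "(nat \<Rightarrow> real) \<Rightarrow> real"
  assumes M: "prob_space M" and P: "prob_space P" and I: "finite I"
  and Vm: "\<And>N. V N \<in> borel_measurable M" and Gm: "G \<in> borel_measurable P"
  and Vs: "\<And>N \<omega> t. t \<notin> I \<Longrightarrow> V N \<omega> t = 0" and Gs: "\<And>\<omega> t. t \<notin> I \<Longrightarrow> G \<omega> t = 0"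
  and ch: "\<And>c. (\<lambda>N. CLINT \<omega>|M. iexp (\<Sum>t\<in>I. c t * V N \<omega> t)) \<longlonglongrightarrow> (CLINT \<omega>|P. iexp (\<Sum>t\<in>I. c t * G \<omega> t))"
  and hc: "continuous_on UNIV h" and hb: "\<And>x. \<bar>h x\<bar> \<le> B"
  shows "(\<lambda>N. \<integral>\<omega>. h (V N \<omega>) \<partial>M) \<longlonglongrightarrow> (\<integral>\<omega>. h (G \<omega>) \<partial>P)"
proof (rule LIMSEQ_I)
  fix r :: real assume r: "0 < r"
  interpret M: prob_space M by fact
  interpret P: prob_space P by fact
  have B0: "0 \<le> B" using hb[of undefined] by linarith
  define e where "e = r / 6"
  have e: "e > 0" using r by (simp add: e_def)
  define \<delta> where "\<delta> = e / (2*B+1)"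
  have \<delta>: "\<delta> > 0" using e B0 by (simp add: \<delta>_def)
  define tail where "tail K = (\<Sum>t\<in>I. \<integral>\<omega>. 1 - psi (G \<omega> t / K) \<partial>P)" for K
  have "(\<lambda>n. tail (real (Suc n))) \<longlonglongrightarrow> (\<Sum>t\<in>I. 0)"
    unfolding tail_def
    by (intro tendsto_sum tail_to0[OF P] measurable_product_then_coordinatewise[OF Gm])
  then have "eventually (\<lambda>n. tail (real (Suc n)) < \<delta>) sequentially"
    using \<delta> by (intro order_tendstoD(2)) auto
  then obtain n where tn: "tail (real (Suc n)) < \<delta>" by (auto simp: eventually_sequentially)
  define K where "K = real (Suc n)"
  have K: "K > 0" by (simp add: K_def)
  have tailK: "tail K < \<delta>" using tn by (simp add: K_def)
  define w where "w = pi / (4*K)"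
  define F0 where "F0 u = h (Aang I w u) * Phi I K (Aang I w u)" for u
  have "continuous_on (torus I) F0" using F0_cont[OF I K hc] unfolding F0_def w_def .
  then obtain p where p: "tp p" "\<forall>u\<in>torus I. \<bar>F0 u - p u\<bar> < e" using SW_tp e by blast
  define q where "q x = p (theta w I x)" for x
  have qQ: "Qx I (\<lambda>x. complex_of_real (q x))" using tp_Qx[OF I p(1)] unfolding q_def .
  obtain Bq where Bq: "\<And>x. \<bar>q x\<bar> \<le> Bq" using Qx_bdd[OF qQ] by auto
  have qc: "continuous_on UNIV q"
    using continuous_on_Re[OF Qx_cont[OF qQ]] by simp
  have "(\<lambda>N. CLINT \<omega>|M. complex_of_real (q (V N \<omega>))) \<longlonglongrightarrow> (CLINT \<omega>|P. complex_of_real (q (G \<omega>)))"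
    by (rule Qx_conv[OF M P Vm Gm ch qQ])
  then have qconv: "(\<lambda>N. \<integral>\<omega>. q (V N \<omega>) \<partial>M) \<longlonglongrightarrow> (\<integral>\<omega>. q (G \<omega>) \<partial>P)"
    by (simp add: tendsto_of_real_iff)
  have key: "\<bar>h x - q x\<bar> \<le> e + 2*B*(\<Sum>t\<in>I. 1 - psi (x t / K))" if xs: "\<And>t. t \<notin> I \<Longrightarrow> x t = 0" for x
  proof -
    have "\<bar>h x - F0 (theta w I x)\<bar> \<le> 2*B*(1 - Phi I K x)"
      unfolding F0_def w_def using key_bound[OF I K hb xs] .
    also have "\<dots> \<le> 2*B*(\<Sum>t\<in>I. 1 - psi (x t / K))"
      unfolding Phi_def using B0 one_minus_prod_le[OF I, of "\<lambda>t. psi (x t / K)"] psi_ge0 psi_le1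
      by (intro mult_left_mono) auto
    finally have a: "\<bar>h x - F0 (theta w I x)\<bar> \<le> 2*B*(\<Sum>t\<in>I. 1 - psi (x t / K))" .
    have b: "\<bar>F0 (theta w I x) - q x\<bar> < e" using p(2) theta_torus unfolding q_def by blast
    show ?thesis using a b by linarith
  qed
  define tailN where "tailN N = (\<Sum>t\<in>I. \<integral>\<omega>. 1 - psi (V N \<omega> t / K) \<partial>M)" for N
  have tailconv: "tailN \<longlonglongrightarrow> tail K"
    unfolding tailN_def tail_def
  proof (intro tendsto_sum)
    fix t assume t: "t \<in> I"
    show "(\<lambda>N. \<integral>\<omega>. 1 - psi (V N \<omega> t / K) \<partial>M) \<longlonglongrightarrow> (\<integral>\<omega>. 1 - psi (G \<omega> t / K) \<partial>P)"
    proof (rule tight_conv[OF M P I t Vm Gm ch, where Bf=1])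
      have "continuous_on UNIV (\<lambda>a::real. a / K)" using K by (intro continuous_on_divide continuous_on_id continuous_on_const) auto
      then have "continuous_on UNIV (\<lambda>a::real. psi (a / K))" by (rule continuous_on_compose2[OF continuous_psi]) auto
      then have "continuous_on UNIV (\<lambda>a::real. 1 - psi (a / K))" by (intro continuous_on_diff continuous_on_const)
      then show "isCont (\<lambda>a. 1 - psi (a / K)) x" for x by (simp add: continuous_on_eq_continuous_at)
    qed (use psi_ge0 psi_le1 in \<open>auto simp: abs_le_iff\<close>)
  qed
  have bN: "\<bar>(\<integral>\<omega>. h (V N \<omega>) \<partial>M) - (\<integral>\<omega>. q (V N \<omega>) \<partial>M)\<bar> \<le> e + 2*B*tailN N" for N
    unfolding tailN_def
    by (rule approx_bound[OF M Vm I Vs bc_integrable[OF M Vm hc hb] bc_integrable[OF M Vm qc Bq] key])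
  have bG: "\<bar>(\<integral>\<omega>. h (G \<omega>) \<partial>P) - (\<integral>\<omega>. q (G \<omega>) \<partial>P)\<bar> \<le> e + 2*B*tail K"
    unfolding tail_def
    by (rule approx_bound[OF P Gm I Gs bc_integrable[OF P Gm hc hb] bc_integrable[OF P Gm qc Bq] key])
  have ev1: "eventually (\<lambda>N. \<bar>tailN N - tail K\<bar> < \<delta>) sequentially"
    using tailconv \<delta> unfolding tendsto_iff dist_real_def by blast
  have ev2: "eventually (\<lambda>N. \<bar>(\<integral>\<omega>. q (V N \<omega>) \<partial>M) - (\<integral>\<omega>. q (G \<omega>) \<partial>P)\<bar> < e) sequentially"
    using qconv e unfolding tendsto_iff dist_real_def by blast
  obtain N0 where N0: "\<And>N. N \<ge> N0 \<Longrightarrow> \<bar>tailN N - tail K\<bar> < \<delta> \<and>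
      \<bar>(\<integral>\<omega>. q (V N \<omega>) \<partial>M) - (\<integral>\<omega>. q (G \<omega>) \<partial>P)\<bar> < e"
    using eventually_conj[OF ev1 ev2] by (auto simp: eventually_sequentially)
  show "\<exists>no. \<forall>n\<ge>no. norm ((\<integral>\<omega>. h (V n \<omega>) \<partial>M) - (\<integral>\<omega>. h (G \<omega>) \<partial>P)) < r"
  proof (intro exI allI impI)
    fix N assume "N0 \<le> N"
    from N0[OF this] have n1: "\<bar>tailN N - tail K\<bar> < \<delta>"
      and n2: "\<bar>(\<integral>\<omega>. q (V N \<omega>) \<partial>M) - (\<integral>\<omega>. q (G \<omega>) \<partial>P)\<bar> < e" by auto
    have t1: "2*B*tailN N \<le> 2*B*(2*\<delta>)" using n1 tailK B0 by (intro mult_left_mono) auto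
    have t2: "2*B*tail K \<le> 2*B*\<delta>" using tailK B0 by (intro mult_left_mono) auto
    have t3: "2*B*(2*\<delta>) + 2*B*\<delta> < 3*e"
    proof -
      have "2*B*(2*\<delta>) + 2*B*\<delta> = (6*B*e) / (2*B+1)" by (simp add: \<delta>_def algebra_simps)
      also have "\<dots> = 3*e * (2*B / (2*B+1))" by simp
      finally have "2*B*(2*\<delta>) + 2*B*\<delta> = 3*e * (2*B / (2*B+1))" .
      also have "\<dots> < 3*e * 1" using e B0 by (intro mult_strict_left_mono) auto
      finally show ?thesis by simp
    qed
    have "norm ((\<integral>\<omega>. h (V N \<omega>) \<partial>M) - (\<integral>\<omega>. h (G \<omega>) \<partial>P)) \<le>
      \<bar>(\<integral>\<omega>. h (V N \<omega>) \<partial>M) - (\<integral>\<omega>. q (V N \<omega>) \<partial>M)\<bar> +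
      \<bar>(\<integral>\<omega>. q (V N \<omega>) \<partial>M) - (\<integral>\<omega>. q (G \<omega>) \<partial>P)\<bar> +
      \<bar>(\<integral>\<omega>. h (G \<omega>) \<partial>P) - (\<integral>\<omega>. q (G \<omega>) \<partial>P)\<bar>" by simp
    also have "\<dots> < 6 * e" using bN[of N] bG n2 t1 t2 t3 by linarith
    finally show "norm ((\<integral>\<omega>. h (V N \<omega>) \<partial>M) - (\<integral>\<omega>. h (G \<omega>) \<partial>P)) < r" by (simp add: e_def)
  qed
qed


lemma cumr_nat: "cumr rho t = real t * rho 0 + 2 * (\<Sum>k\<in>{1..<t}. (real t - real k) * rho k)"
proof (cases "t = 0")
  case True then show ?thesis by (simp add: cumr_def)
next
  case False
  have set: "{-(int t)+1..int t - 1} = int ` {1..<t} \<union> ({0} \<union> (\<lambda>k. - int k) ` {1..<t})"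
  proof (intro set_eqI iffI)
    fix x assume x: "x \<in> {-(int t)+1..int t - 1}"
    show "x \<in> int ` {1..<t} \<union> ({0} \<union> (\<lambda>k. - int k) ` {1..<t})"
    proof (cases "x > 0")
      case True then have "x = int (nat x)" "nat x \<in> {1..<t}" using x by auto
      then show ?thesis by blast
    next
      case False
      show ?thesis
      proof (cases "x = 0")
        case False
        then have "x = - int (nat (-x))" "nat (-x) \<in> {1..<t}" using x \<open>\<not> x > 0\<close> by auto
        then show ?thesis by blast
      qed simp
    qed
  qed (use False in auto)
  have d1: "int ` {1..<t} \<inter> ({0} \<union> (\<lambda>k. - int k) ` {1..<t}) = {}" by auto
  have d2: "{0} \<inter> (\<lambda>k. - int k) ` {1..<t} = {}" by auto
  let ?f = "\<lambda>s::int. (real t - real_of_int \<bar>s\<bar>) * rho (nat \<bar>s\<bar>)"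
  have "cumr rho t = sum ?f (int ` {1..<t}) + (?f 0 + sum ?f ((\<lambda>k. - int k) ` {1..<t}))"
    unfolding cumr_def set using d1 d2
    by (simp add: sum.union_disjoint)
  also have "sum ?f (int ` {1..<t}) = (\<Sum>k\<in>{1..<t}. (real t - real k) * rho k)"
    by (subst sum.reindex) (auto simp: inj_on_def)
  also have "sum ?f ((\<lambda>k. - int k) ` {1..<t}) = (\<Sum>k\<in>{1..<t}. (real t - real k) * rho k)"
    by (subst sum.reindex) (auto simp: inj_on_def)
  finally show ?thesis by simp
qed

definition ndist :: "nat \<Rightarrow> nat \<Rightarrow> nat" where "ndist s u = (if s \<le> u then u - s else s - u)"

definition Dsum :: "(nat \<Rightarrow> real) \<Rightarrow> nat \<Rightarrow> nat \<Rightarrow> real" where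
  "Dsum rho t v = (\<Sum>s\<in>{1..t}. \<Sum>u\<in>{1..v}. rho (ndist s u))"

lemma ndist_sym: "ndist s u = ndist u s" by (simp add: ndist_def)

lemma Dsum_sym: "Dsum rho t v = Dsum rho v t"
  unfolding Dsum_def by (subst sum.swap) (simp only: ndist_sym)

lemma sum_refl: "(\<Sum>s\<in>{1..t}. rho (Suc t - s)) = (\<Sum>k\<in>{1..t}. rho k :: real)"
proof -
  have "(\<Sum>s\<in>{1..t}. rho (Suc t - s)) = (\<Sum>k\<in>(\<lambda>s. Suc t - s) ` {1..t}. rho k)"
    by (subst sum.reindex) (auto simp: inj_on_def)
  also have "(\<lambda>s. Suc t - s) ` {1..t} = {1..t}"
  proof (intro set_eqI iffI)
    fix k assume "k \<in> {1..t}" then show "k \<in> (\<lambda>s. Suc t - s) ` {1..t}"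
      by (intro image_eqI[of _ _ "Suc t - k"]) auto
  qed auto
  finally show ?thesis .
qed

lemma Dsum_diag: "Dsum rho t t = real t * rho 0 + 2 * (\<Sum>k\<in>{1..<t}. (real t - real k) * rho k)"
proof (induction t)
  case 0 then show ?case by (simp add: Dsum_def)
next
  case (Suc t)
  have "Dsum rho (Suc t) (Suc t) = Dsum rho t t + 2 * (\<Sum>s\<in>{1..t}. rho (Suc t - s)) + rho 0"
  proof -
    have "Dsum rho (Suc t) (Suc t) = (\<Sum>s\<in>{1..t}. \<Sum>u\<in>{1..Suc t}. rho (ndist s u)) + (\<Sum>u\<in>{1..Suc t}. rho (ndist (Suc t) u))"
      unfolding Dsum_def by simp
    also have "(\<Sum>s\<in>{1..t}. \<Sum>u\<in>{1..Suc t}. rho (ndist s u)) = Dsum rho t t + (\<Sum>s\<in>{1..t}. rho (Suc t - s))"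
      unfolding Dsum_def by (simp add: sum.distrib ndist_def)
    also have "(\<Sum>u\<in>{1..Suc t}. rho (ndist (Suc t) u)) = (\<Sum>s\<in>{1..t}. rho (Suc t - s)) + rho 0"
      by (simp add: ndist_def)
    finally show ?thesis by simp
  qed
  also have "\<dots> = real (Suc t) * rho 0 + 2 * (\<Sum>k\<in>{1..<Suc t}. (real (Suc t) - real k) * rho k)"
  proof -
    have a: "(\<Sum>k\<in>{1..<Suc t}. (real (Suc t) - real k) * rho k) =
          (\<Sum>k\<in>{1..<t}. (real t - real k) * rho k) + (\<Sum>k\<in>{1..t}. rho k)"
    proof -
      have "(\<Sum>k\<in>{1..<Suc t}. (real (Suc t) - real k) * rho k) = (\<Sum>k\<in>{1..t}. (real t - real k) * rho k + rho k)"
        by (intro sum.cong) (auto simp: algebra_simps)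
      also have "\<dots> = (\<Sum>k\<in>{1..t}. (real t - real k) * rho k) + (\<Sum>k\<in>{1..t}. rho k)"
        by (simp add: sum.distrib)
      also have "(\<Sum>k\<in>{1..t}. (real t - real k) * rho k) = (\<Sum>k\<in>{1..<t}. (real t - real k) * rho k)"
      proof (cases t)
        case (Suc m)
        then show ?thesis by (simp add: atLeastLessThanSuc_atLeastAtMost[symmetric])
      qed simp
      finally show ?thesis .
    qed
    show ?thesis using Suc.IH unfolding a sum_refl by (simp add: algebra_simps)
  qed
  finally show ?case .
qed

lemma Dsum_Lam:
  assumes "t \<ge> 1" "v \<ge> 1"
  shows "Dsum rho t v = Lam rho t v"
proof -
  have le: "Dsum rho t v = cumr rho t + shiftR rho t v" if "t \<le> v" for t v
  proof -
    have "{1..v} = {1..t} \<union> {t+1..v}" using that by auto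
    then have "Dsum rho t v = (\<Sum>s\<in>{1..t}. (\<Sum>u\<in>{1..t}. rho (ndist s u)) + (\<Sum>u\<in>{t+1..v}. rho (ndist s u)))"
      unfolding Dsum_def by (intro sum.cong refl, simp, subst sum.union_disjoint) auto
    also have "\<dots> = Dsum rho t t + shiftR rho t v"
      unfolding Dsum_def shiftR_def by (simp add: sum.distrib ndist_def)
    finally show ?thesis by (simp add: Dsum_diag cumr_nat)
  qed
  show ?thesis
    unfolding Lam_def using le[of t v] le[of v t] Dsum_sym[of rho t v]
    by (auto simp: Dsum_diag cumr_nat)
qed


locale panel = prob_space M for M :: "'a measure" +
  fixes eps :: "nat \<Rightarrow> nat \<Rightarrow> 'a \<Rightarrow> real" and T :: nat and rho :: "nat \<Rightarrow> real"
  assumes meas: "\<And>i t. i \<ge> 1 \<Longrightarrow> t \<in> {1..T} \<Longrightarrow> eps i t \<in> borel_measurable M"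
    and indep: "indep_vars (\<lambda>_. PiM {1..T} (\<lambda>_. borel))
                  (\<lambda>i \<omega>. \<lambda>t\<in>{1..T}. eps i t \<omega>) {1..}"
    and ident: "\<And>i j. i \<ge> 1 \<Longrightarrow> j \<ge> 1 \<Longrightarrow>
                  distr M (PiM {1..T} (\<lambda>_. borel)) (\<lambda>\<omega>. \<lambda>t\<in>{1..T}. eps i t \<omega>) =
                  distr M (PiM {1..T} (\<lambda>_. borel)) (\<lambda>\<omega>. \<lambda>t\<in>{1..T}. eps j t \<omega>)"
    and sq_int: "\<And>i t. i \<ge> 1 \<Longrightarrow> t \<in> {1..T} \<Longrightarrow> integrable M (\<lambda>\<omega>. (eps i t \<omega>)\<^sup>2)"
    and mean0: "\<And>i t. i \<ge> 1 \<Longrightarrow> t \<in> {1..T} \<Longrightarrow> (\<integral>\<omega>. eps i t \<omega> \<partial>M) = 0"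
    and var1: "\<And>i t. i \<ge> 1 \<Longrightarrow> t \<in> {1..T} \<Longrightarrow> prob_space.variance M (eps i t) = 1"
    and autocov: "\<And>i s k. i \<ge> 1 \<Longrightarrow> 1 \<le> s \<Longrightarrow> s + k \<le> T \<Longrightarrow>
                  (\<integral>\<omega>. (eps i s \<omega> - (\<integral>x. eps i s x \<partial>M)) * (eps i (s + k) \<omega> - (\<integral>x. eps i (s + k) x \<partial>M)) \<partial>M) = rho k"
begin

lemma eps_int: "i \<ge> 1 \<Longrightarrow> t \<in> {1..T} \<Longrightarrow> integrable M (eps i t)"
  by (rule square_integrable_imp_integrable[OF meas sq_int])

lemma prod_int:
  assumes "i \<ge> 1" "s \<in> {1..T}" "u \<in> {1..T}"
  shows "integrable M (\<lambda>\<omega>. eps i s \<omega> * eps i u \<omega>)"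
proof (rule Bochner_Integration.integrable_bound)
  show "integrable M (\<lambda>\<omega>. (eps i s \<omega>)\<^sup>2 + (eps i u \<omega>)\<^sup>2)"
    using sq_int assms by auto
  show "(\<lambda>\<omega>. eps i s \<omega> * eps i u \<omega>) \<in> borel_measurable M"
    using meas assms by (intro borel_measurable_times) auto
  show "AE x in M. norm (eps i s x * eps i u x) \<le> norm ((eps i s x)\<^sup>2 + (eps i u x)\<^sup>2)"
  proof (intro AE_I2)
    fix x
    have "0 \<le> (\<bar>eps i s x\<bar> - \<bar>eps i u x\<bar>)\<^sup>2" by simp
    then have "\<bar>eps i s x\<bar> * \<bar>eps i u x\<bar> \<le> (eps i s x)\<^sup>2 + (eps i u x)\<^sup>2"
      by (simp add: power2_eq_square algebra_simps) (smt (verit) mult_nonneg_nonneg abs_ge_zero)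
    then show "norm (eps i s x * eps i u x) \<le> norm ((eps i s x)\<^sup>2 + (eps i u x)\<^sup>2)"
      by (simp add: abs_mult)
  qed
qed

lemma cov_eps:
  assumes "i \<ge> 1" "s \<in> {1..T}" "u \<in> {1..T}"
  shows "(\<integral>\<omega>. eps i s \<omega> * eps i u \<omega> \<partial>M) = rho (ndist s u)"
proof (cases "s \<le> u")
  case True
  have "rho (u - s) = (\<integral>\<omega>. (eps i s \<omega> - 0) * (eps i (s + (u - s)) \<omega> - 0) \<partial>M)"
    using autocov[of i s "u - s"] mean0[of i s] mean0[of i u] assms True by simp
  then show ?thesis using True by (simp add: ndist_def)
next
  case False
  have "rho (s - u) = (\<integral>\<omega>. (eps i u \<omega> - 0) * (eps i (u + (s - u)) \<omega> - 0) \<partial>M)"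
    using autocov[of i u "s - u"] mean0[of i s] mean0[of i u] assms False by simp
  then show ?thesis using False by (simp add: ndist_def mult.commute)
qed

lemma rho0: "T \<ge> 1 \<Longrightarrow> rho 0 = 1"
  using cov_eps[of 1 1 1] var1[of 1 1] mean0[of 1 1]
  by (simp add: ndist_def power2_eq_square)

definition Ps :: "nat \<Rightarrow> nat \<Rightarrow> 'a \<Rightarrow> real" where
  "Ps i t \<omega> = (\<Sum>s\<in>{1..t}. eps i s \<omega>)"

lemma Ps_meas: "i \<ge> 1 \<Longrightarrow> t \<le> T \<Longrightarrow> Ps i t \<in> borel_measurable M"
  unfolding Ps_def using meas by (intro borel_measurable_sum) auto

lemma Ps_prod:
  "Ps i t \<omega> * Ps i v \<omega> = (\<Sum>s\<in>{1..t}. \<Sum>u\<in>{1..v}. eps i s \<omega> * eps i u \<omega>)"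
  unfolding Ps_def by (simp add: sum_product)

lemma Ps_prod_int:
  assumes "i \<ge> 1" "t \<le> T" "v \<le> T"
  shows "integrable M (\<lambda>\<omega>. Ps i t \<omega> * Ps i v \<omega>)"
  unfolding Ps_prod using assms by (intro Bochner_Integration.integrable_sum prod_int) auto

lemma int_sum2:
  fixes f :: "nat \<Rightarrow> nat \<Rightarrow> 'a \<Rightarrow> real"
  assumes "finite S" "finite U" "\<And>s u. s \<in> S \<Longrightarrow> u \<in> U \<Longrightarrow> integrable M (f s u)"
  shows "(\<integral>\<omega>. (\<Sum>s\<in>S. \<Sum>u\<in>U. f s u \<omega>) \<partial>M) = (\<Sum>s\<in>S. \<Sum>u\<in>U. \<integral>\<omega>. f s u \<omega> \<partial>M)"
proof -
  have "(\<integral>\<omega>. (\<Sum>s\<in>S. \<Sum>u\<in>U. f s u \<omega>) \<partial>M) = (\<Sum>s\<in>S. \<integral>\<omega>. (\<Sum>u\<in>U. f s u \<omega>) \<partial>M)"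
    by (rule Bochner_Integration.integral_sum) (use assms in \<open>auto intro!: Bochner_Integration.integrable_sum\<close>)
  also have "\<dots> = (\<Sum>s\<in>S. \<Sum>u\<in>U. \<integral>\<omega>. f s u \<omega> \<partial>M)"
    by (intro sum.cong refl Bochner_Integration.integral_sum) (use assms in auto)
  finally show ?thesis .
qed

lemma cov_Ps:
  assumes "i \<ge> 1" "t \<in> {1..T}" "v \<in> {1..T}"
  shows "(\<integral>\<omega>. Ps i t \<omega> * Ps i v \<omega> \<partial>M) = Lam rho t v"
proof -
  have "(\<integral>\<omega>. Ps i t \<omega> * Ps i v \<omega> \<partial>M) = (\<Sum>s\<in>{1..t}. \<Sum>u\<in>{1..v}. \<integral>\<omega>. eps i s \<omega> * eps i u \<omega> \<partial>M)"
    unfolding Ps_prod using assms by (intro int_sum2 prod_int) auto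
  also have "\<dots> = Dsum rho t v"
    unfolding Dsum_def using assms by (intro sum.cong refl) (simp add: cov_eps)
  also have "\<dots> = Lam rho t v" using assms by (intro Dsum_Lam) auto
  finally show ?thesis .
qed

definition Qf :: "(nat \<Rightarrow> real) \<Rightarrow> real" where
  "Qf c = (\<Sum>t\<in>{1..T}. \<Sum>v\<in>{1..T}. c t * c v * Lam rho t v)"

definition Wc :: "(nat \<Rightarrow> real) \<Rightarrow> nat \<Rightarrow> 'a \<Rightarrow> real" where
  "Wc c i \<omega> = (\<Sum>t\<in>{1..T}. c t * Ps i t \<omega>)"

lemma Wc_meas: "i \<ge> 1 \<Longrightarrow> Wc c i \<in> borel_measurable M"
  unfolding Wc_def using Ps_meas by (intro borel_measurable_sum borel_measurable_times) auto

lemma Wc_sq: "(Wc c i \<omega>)\<^sup>2 = (\<Sum>t\<in>{1..T}. \<Sum>v\<in>{1..T}. c t * c v * (Ps i t \<omega> * Ps i v \<omega>))"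
  unfolding Wc_def power2_eq_square sum_product by (simp add: algebra_simps)

lemma Wc_sq_int: "i \<ge> 1 \<Longrightarrow> integrable M (\<lambda>\<omega>. (Wc c i \<omega>)\<^sup>2)"
  unfolding Wc_sq by (intro Bochner_Integration.integrable_sum integrable_mult_right Ps_prod_int) auto

lemma Wc_var: "i \<ge> 1 \<Longrightarrow> (\<integral>\<omega>. (Wc c i \<omega>)\<^sup>2 \<partial>M) = Qf c"
  unfolding Wc_sq Qf_def
  by (subst int_sum2) (auto intro!: integrable_mult_right Ps_prod_int sum.cong simp: cov_Ps)

lemma Ps_int: "i \<ge> 1 \<Longrightarrow> t \<le> T \<Longrightarrow> integrable M (Ps i t)"
  unfolding Ps_def[abs_def] using eps_int by (intro Bochner_Integration.integrable_sum) auto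

lemma Ps_mean: "i \<ge> 1 \<Longrightarrow> t \<le> T \<Longrightarrow> (\<integral>\<omega>. Ps i t \<omega> \<partial>M) = 0"
  unfolding Ps_def using eps_int mean0 by (simp add: Bochner_Integration.integral_sum)

lemma Wc_int: "i \<ge> 1 \<Longrightarrow> integrable M (Wc c i)"
  unfolding Wc_def[abs_def] using Ps_int by (intro Bochner_Integration.integrable_sum integrable_mult_right) auto

lemma Wc_mean: "i \<ge> 1 \<Longrightarrow> (\<integral>\<omega>. Wc c i \<omega> \<partial>M) = 0"
  unfolding Wc_def using Ps_int Ps_mean by (simp add: Bochner_Integration.integral_sum)

lemma Qf_nonneg: "T \<ge> 1 \<Longrightarrow> Qf c \<ge> 0"
  using Wc_var[of 1 c] by (metis integral_nonneg_AE AE_I2 zero_le_power2 le_refl)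

end

lemma (in prob_space) indep_sets_reindex:
  assumes inj: "inj_on f I" and ind: "indep_sets F (f ` I)"
  shows "indep_sets (\<lambda>i. F (f i)) I"
  unfolding indep_sets_def
proof (intro conjI ballI allI impI)
  fix i assume "i \<in> I" then show "F (f i) \<subseteq> events" using ind by (auto simp: indep_sets_def)
next
  fix J A assume J: "J \<subseteq> I" "J \<noteq> {}" "finite J" and A: "A \<in> Pi J (\<lambda>i. F (f i))"
  define A' where "A' k = A (the_inv_into J f k)" for k
  have injJ: "inj_on f J" using inj J(1) by (rule inj_on_subset)
  have A'f: "A' (f j) = A j" if "j \<in> J" for j unfolding A'_def using the_inv_into_f_f[OF injJ that] by simp
  have "A' \<in> Pi (f ` J) F" using A A'f by auto
  then have "prob (\<Inter>k\<in>f ` J. A' k) = (\<Prod>k\<in>f ` J. prob (A' k))"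
    using ind J unfolding indep_sets_def by (metis finite_imageI image_is_empty image_mono)
  moreover have "(\<Inter>k\<in>f ` J. A' k) = (\<Inter>j\<in>J. A j)" using A'f by auto
  moreover have "(\<Prod>k\<in>f ` J. prob (A' k)) = (\<Prod>j\<in>J. prob (A j))"
    using A'f by (simp add: prod.reindex[OF injJ])
  ultimately show "prob (\<Inter>j\<in>J. A j) = (\<Prod>j\<in>J. prob (A j))" by simp
qed

lemma (in prob_space) indep_vars_Suc:
  assumes "indep_vars (\<lambda>_. N) Z {1..}"
  shows "indep_vars (\<lambda>_. N) (\<lambda>n. Z (Suc n)) UNIV"
proof -
  have e: "{1..} = Suc ` UNIV" by (auto simp: image_iff Suc_le_D)
  show ?thesis
    using assms unfolding indep_vars_def2 e
    by (auto intro: indep_sets_reindex[where f=Suc, simplified])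
qed

context panel
begin

definition gc :: "(nat \<Rightarrow> real) \<Rightarrow> (nat \<Rightarrow> real) \<Rightarrow> real" where
  "gc c y = (\<Sum>t\<in>{1..T}. c t * (\<Sum>s\<in>{1..t}. y s))"

lemma gc_meas: "gc c \<in> borel_measurable (PiM {1..T} (\<lambda>_. borel))"
  unfolding gc_def[abs_def]
  by (intro borel_measurable_sum borel_measurable_times borel_measurable_const
        measurable_component_singleton) auto

lemma vec_meas: "i \<ge> 1 \<Longrightarrow> (\<lambda>\<omega>. \<lambda>t\<in>{1..T}. eps i t \<omega>) \<in> measurable M (PiM {1..T} (\<lambda>_. borel))"
  by (intro measurable_restrict meas) auto

lemma Wc_gc: "Wc c i \<omega> = gc c (\<lambda>t\<in>{1..T}. eps i t \<omega>)"
  unfolding Wc_def gc_def Ps_def by (intro sum.cong refl) auto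

lemma Wc_indep: "indep_vars (\<lambda>_. borel) (\<lambda>n. Wc c (Suc n)) UNIV"
proof -
  have "indep_vars (\<lambda>_. borel) (\<lambda>i \<omega>. gc c ((\<lambda>t\<in>{1..T}. eps i t \<omega>))) {1..}"
    by (rule indep_vars_compose2[OF indep]) (rule gc_meas)
  then have "indep_vars (\<lambda>_. borel) (\<lambda>i. Wc c i) {1..}"
    unfolding Wc_gc[abs_def] .
  then show ?thesis by (rule indep_vars_Suc)
qed

lemma Wc_distr: "i \<ge> 1 \<Longrightarrow> distr M borel (Wc c i) = distr M borel (Wc c 1)"
proof -
  assume i: "i \<ge> 1"
  have "distr M borel (Wc c j) = distr (distr M (PiM {1..T} (\<lambda>_. borel)) (\<lambda>\<omega>. \<lambda>t\<in>{1..T}. eps j t \<omega>)) borel (gc c)"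
    if "j \<ge> 1" for j
    using distr_distr[OF gc_meas vec_meas[OF that]] unfolding Wc_gc[abs_def] comp_def by simp
  then show ?thesis using i ident[OF i, of 1] by simp
qed

end

lemma sum_Suc_shift: "(\<Sum>i<n. f (Suc i)) = (\<Sum>i\<in>{1..n}. f i :: 'b::comm_monoid_add)"
  by (rule sum_bounds_lt_plus1)

lemma iexp_meas[measurable]: "iexp \<in> borel_measurable borel"
  by (intro borel_measurable_continuous_onI continuous_at_imp_continuous_on) simp

context panel begin

lemma Wc_AE0:
  assumes "Qf c = 0" "i \<ge> 1"
  shows "AE \<omega> in M. Wc c i \<omega> = 0"
proof -
  have "(\<integral>\<omega>. (Wc c i \<omega>)\<^sup>2 \<partial>M) = 0" using Wc_var[OF assms(2)] assms(1) by simp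
  then have "AE \<omega> in M. (Wc c i \<omega>)\<^sup>2 = 0"
    using integral_nonneg_eq_0_iff_AE[OF Wc_sq_int[OF assms(2)]] by simp
  then show ?thesis by simp
qed

lemma char_conv:
  assumes T1: "T \<ge> 1"
  shows "(\<lambda>N. CLINT \<omega>|M. iexp ((\<Sum>i\<in>{1..N}. Wc c i \<omega>) / sqrt N)) \<longlonglongrightarrow> complex_of_real (exp (- Qf c / 2))"
proof (cases "Qf c = 0")
  case True
  have "(CLINT \<omega>|M. iexp ((\<Sum>i\<in>{1..N}. Wc c i \<omega>) / sqrt N)) = (CLINT \<omega>|M. 1)" for N
  proof (rule integral_cong_AE)
    have "AE \<omega> in M. \<forall>i\<in>{1..N}. Wc c i \<omega> = 0"
      by (rule AE_finite_allI) (use Wc_AE0[OF True] in auto)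
    then show "AE \<omega> in M. iexp ((\<Sum>i\<in>{1..N}. Wc c i \<omega>) / sqrt N) = 1"
      by eventually_elim simp
    show "(\<lambda>\<omega>. iexp ((\<Sum>i\<in>{1..N}. Wc c i \<omega>) / sqrt N)) \<in> borel_measurable M"
    proof -
      have "(\<lambda>\<omega>. (\<Sum>i\<in>{1..N}. Wc c i \<omega>) / sqrt N) \<in> borel_measurable M"
        using Wc_meas by (intro borel_measurable_divide borel_measurable_sum borel_measurable_const) auto
      then show ?thesis by (rule measurable_compose[OF _ iexp_meas])
    qed
  qed simp
  then show ?thesis using True by (simp add: prob_space)
next
  case False
  then have q: "Qf c > 0" using Qf_nonneg[OF T1, of c] by linarith
  define \<sigma> where "\<sigma> = sqrt (Qf c)"
  have \<sigma>: "\<sigma> > 0" "\<sigma>\<^sup>2 = Qf c" using q by (auto simp: \<sigma>_def)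
  define X where "X n = Wc c (Suc n)" for n
  have CLT: "weak_conv_m (\<lambda>n. distr M borel (\<lambda>x. (\<Sum>i<n. X i x) / sqrt (real n * \<sigma>\<^sup>2))) std_normal_distribution"
  proof (rule central_limit_theorem_zero_mean[where X=X and \<mu>="distr M borel (X 0)" and \<sigma>=\<sigma>])
    show "indep_vars (\<lambda>i. borel) X UNIV" unfolding X_def[abs_def] by (rule Wc_indep)
    show "expectation (X n) = 0" for n unfolding X_def by (rule Wc_mean) simp
    show "0 < \<sigma>" by (rule \<sigma>)
    show "integrable M (\<lambda>x. (X n x)\<^sup>2)" for n unfolding X_def by (rule Wc_sq_int) simp
    show "variance (X n) = \<sigma>\<^sup>2" for n
      unfolding X_def using Wc_mean[of "Suc n" c] Wc_var[of "Suc n" c] \<sigma> by simp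
    show "distr M borel (X n) = distr M borel (X 0)" for n
    proof -
      have "distr M borel (Wc c (Suc n)) = distr M borel (Wc c 1)" by (rule Wc_distr) simp
      then show ?thesis unfolding X_def by (simp only: One_nat_def[symmetric])
    qed
  qed
  have Xm: "X n \<in> borel_measurable M" for n unfolding X_def by (rule Wc_meas) simp
  have fm: "(\<lambda>x. (\<Sum>i<n. X i x) / sqrt (real n * \<sigma>\<^sup>2)) \<in> borel_measurable M" for n
    using Xm by (intro borel_measurable_divide borel_measurable_sum) auto
  have "(\<lambda>n. char (distr M borel (\<lambda>x. (\<Sum>i<n. X i x) / sqrt (real n * \<sigma>\<^sup>2))) \<sigma>) \<longlonglongrightarrow> char std_normal_distribution \<sigma>"
    by (rule levy_continuity1[OF _ real_dist_normal_dist CLT]) (use fm in simp)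
  moreover have "char (distr M borel (\<lambda>x. (\<Sum>i<n. X i x) / sqrt (real n * \<sigma>\<^sup>2))) \<sigma> =
      (CLINT \<omega>|M. iexp ((\<Sum>i\<in>{1..n}. Wc c i \<omega>) / sqrt n))" for n
  proof -
    have e: "\<sigma> * ((\<Sum>i<n. X i x) / sqrt (real n * \<sigma>\<^sup>2)) = (\<Sum>i\<in>{1..n}. Wc c i x) / sqrt n" for x
    proof -
      have s: "(\<Sum>i<n. Wc c (Suc i) x) = (\<Sum>i\<in>{1..n}. Wc c i x)" by (rule sum_Suc_shift)
      show ?thesis using \<sigma>(1) s by (simp add: X_def real_sqrt_mult)
    qed
    have m: "(\<lambda>y. iexp (\<sigma> * y)) \<in> borel_measurable borel" by measurable
    have "char (distr M borel (\<lambda>x. (\<Sum>i<n. X i x) / sqrt (real n * \<sigma>\<^sup>2))) \<sigma> =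
      (CLINT \<omega>|M. iexp (\<sigma> * ((\<Sum>i<n. X i \<omega>) / sqrt (real n * \<sigma>\<^sup>2))))"
      unfolding char_def by (rule integral_distr[OF fm m])
    also have "\<dots> = (CLINT \<omega>|M. iexp ((\<Sum>i\<in>{1..n}. Wc c i \<omega>) / sqrt n))"
      by (simp only: e)
    finally show ?thesis .
  qed
  moreover have "char std_normal_distribution \<sigma> = complex_of_real (exp (- Qf c / 2))"
    using \<sigma> by (simp add: char_std_normal_distribution)
  ultimately show ?thesis by simp
qed

end

lemma cont_Max:
  assumes "finite S" "S \<noteq> {}" "\<And>s. s \<in> S \<Longrightarrow> continuous_on U (g s)"
  shows "continuous_on U (\<lambda>x. Max ((\<lambda>s. g s x) ` S) :: real)"
  using assms
proof (induction S rule: finite_ne_induct)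
  case (singleton s) then show ?case by simp
next
  case (insert s F)
  have "continuous_on U (\<lambda>x. max (g s x) (Max ((\<lambda>s. g s x) ` F)))"
    using insert by (intro continuous_on_max) auto
  moreover have "Max ((\<lambda>s. g s x) ` insert s F) = max (g s x) (Max ((\<lambda>s. g s x) ` F))" for x
    using insert by (simp add: Max_insert)
  ultimately show ?case by simp
qed

lemma gauss_char:
  assumes g: "centered_mvnormal P X T L"
  shows "(CLINT \<omega>|P. iexp (s * (\<Sum>t\<in>{1..T}. c t * X t \<omega>))) =
         complex_of_real (exp (- (s\<^sup>2 * (\<Sum>t\<in>{1..T}. \<Sum>v\<in>{1..T}. c t * c v * L t v)) / 2))"
proof -
  from g have A: "\<forall>c. (CLINT \<omega>|P. iexp (\<Sum>t\<in>{1..T}. c t * X t \<omega>)) =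
      complex_of_real (exp (- (\<Sum>t\<in>{1..T}. \<Sum>v\<in>{1..T}. c t * c v * L t v) / 2))"
    unfolding centered_mvnormal_def by blast
  have e: "s * (\<Sum>t\<in>{1..T}. c t * X t \<omega>) = (\<Sum>t\<in>{1..T}. (s * c t) * X t \<omega>)" for \<omega>
    by (simp add: sum_distrib_left mult.assoc)
  have e2: "s\<^sup>2 * (\<Sum>t\<in>{1..T}. \<Sum>v\<in>{1..T}. c t * c v * L t v) = (\<Sum>t\<in>{1..T}. \<Sum>v\<in>{1..T}. (s * c t) * (s * c v) * L t v)"
    by (simp add: sum_distrib_left power2_eq_square algebra_simps)
  show ?thesis unfolding e e2 using spec[OF A, of "\<lambda>t. s * c t"] by (simp only:)
qed

lemma gauss_lin:
  fixes c :: "nat \<Rightarrow> real"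
  assumes g: "centered_mvnormal P X T L"
  defines "q \<equiv> (\<Sum>t\<in>{1..T}. \<Sum>v\<in>{1..T}. c t * c v * L t v)"
  shows "q = 0 \<Longrightarrow> AE \<omega> in P. (\<Sum>t\<in>{1..T}. c t * X t \<omega>) = 0"
    and "q > 0 \<Longrightarrow> AE \<omega> in P. (\<Sum>t\<in>{1..T}. c t * X t \<omega>) \<noteq> 0"
proof -
  interpret P: prob_space P using g unfolding centered_mvnormal_def by blast
  define Y where "Y \<omega> = (\<Sum>t\<in>{1..T}. c t * X t \<omega>)" for \<omega>
  have Ym[measurable]: "Y \<in> borel_measurable P"
    unfolding Y_def[abs_def] using g unfolding centered_mvnormal_def by (intro borel_measurable_sum borel_measurable_times) auto
  have rd: "real_distribution (distr P borel Y)" by simp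
  have chY: "char (distr P borel Y) s = complex_of_real (exp (- (s\<^sup>2 * q) / 2))" for s
  proof -
    have m: "(\<lambda>y. iexp (s * y)) \<in> borel_measurable borel" by measurable
    have "char (distr P borel Y) s = (CLINT \<omega>|P. iexp (s * Y \<omega>))"
      unfolding char_def by (rule integral_distr[OF Ym m])
    then show ?thesis unfolding Y_def q_def using gauss_char[OF g] by simp
  qed
  show "AE \<omega> in P. Y \<omega> = 0" if q0: "q = 0"
  proof -
    have rd0: "real_distribution (return borel (0::real))" by (simp add: real_distribution_def real_distribution_axioms_def prob_space_return)
    have "char (return borel 0) s = 1" for s by (simp add: char_def integral_return)
    then have "char (distr P borel Y) = char (return borel 0)"
      by (intro ext) (simp add: chY q0)
    then have e0: "distr P borel Y = return borel 0" by (rule Levy_uniqueness[OF rd rd0])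
    have "AE y in distr P borel Y. y = 0" unfolding e0 by (subst AE_return) auto
    then show ?thesis by (simp add: AE_distr_iff)
  qed
  show "AE \<omega> in P. Y \<omega> \<noteq> 0" if qp: "q > 0"
  proof -
    define \<sigma> where "\<sigma> = sqrt q"
    have \<sigma>: "\<sigma> > 0" "\<sigma>\<^sup>2 = q" using qp by (auto simp: \<sigma>_def)
    let ?N = "distr std_normal_distribution borel (\<lambda>x. \<sigma> * x)"
    interpret SN: real_distribution std_normal_distribution by (rule real_dist_normal_dist)
    have rdN: "real_distribution ?N" by simp
    have "char ?N s = char std_normal_distribution (s * \<sigma>)" for s
    proof -
      have m: "(\<lambda>y. iexp (s * y)) \<in> borel_measurable borel" by measurable
      have "char ?N s = (CLINT x|std_normal_distribution. iexp (s * (\<sigma> * x)))"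
        unfolding char_def by (rule integral_distr[OF _ m]) simp
      then show ?thesis unfolding char_def by (simp add: mult.assoc)
    qed
    then have "char (distr P borel Y) = char ?N"
      by (intro ext) (simp add: chY char_std_normal_distribution power_mult_distrib \<sigma>(2)[symmetric] mult.commute)
    then have eq: "distr P borel Y = ?N" by (rule Levy_uniqueness[OF rd rdN])
    have dm: "(\<lambda>x. ennreal (std_normal_density x)) \<in> borel_measurable lborel" by simp
    have "AE x in std_normal_distribution. x \<noteq> 0"
      unfolding AE_density[OF dm] using AE_lborel_singleton[of 0]
      by eventually_elim auto
    then have n0: "AE y in ?N. y \<noteq> 0" using \<sigma> by (simp add: AE_distr_iff)
    have "AE y in distr P borel Y. y \<noteq> 0" unfolding eq by (rule n0)
    then show ?thesis by (simp add: AE_distr_iff)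
  qed
qed


definition gC :: "nat \<Rightarrow> real \<Rightarrow> (nat \<Rightarrow> real) \<Rightarrow> real" where
  "gC T sig x = sig * Max ((\<lambda>t. \<bar>x t - real t / real T * x T\<bar>) ` {1..T-1})"
definition num :: "nat \<Rightarrow> (nat \<Rightarrow> real) \<Rightarrow> real" where
  "num t x = Max ((\<lambda>s. \<bar>x s - real s / real t * x t\<bar>) ` {1..t})"
definition den :: "nat \<Rightarrow> nat \<Rightarrow> (nat \<Rightarrow> real) \<Rightarrow> real" where
  "den T t x = Max ((\<lambda>s. \<bar>(x T - x s) - (real T - real s) / (real T - real t) * (x T - x t)\<bar>) ` {t..T-1})"
definition gR :: "nat \<Rightarrow> (nat \<Rightarrow> real) \<Rightarrow> real" where
  "gR T x = Max ((\<lambda>t. num t x / den T t x) ` {2..T-2})"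
definition gRd :: "nat \<Rightarrow> real \<Rightarrow> (nat \<Rightarrow> real) \<Rightarrow> real" where
  "gRd T d x = Max ((\<lambda>t. num t x / max d (den T t x)) ` {2..T-2})"

lemma cont_lin1: "continuous_on UNIV (\<lambda>x::nat\<Rightarrow>real. \<bar>x s - k * x t\<bar>)"
  by (intro continuous_on_rabs continuous_on_diff coord_cont continuous_on_mult_left)

lemma cont_lin2: "continuous_on UNIV (\<lambda>x::nat\<Rightarrow>real. \<bar>(x a - x s) - k * (x a - x t)\<bar>)"
  by (intro continuous_on_rabs continuous_on_diff coord_cont continuous_on_mult_left)

lemma gC_cont: "T \<ge> 2 \<Longrightarrow> continuous_on UNIV (gC T sig)"
  unfolding gC_def[abs_def]
  by (intro continuous_on_mult_left cont_Max cont_lin1) auto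

lemma num_cont: "t \<ge> 1 \<Longrightarrow> continuous_on UNIV (num t)"
  unfolding num_def[abs_def] by (intro cont_Max cont_lin1) auto

lemma den_cont: "t + 1 \<le> T \<Longrightarrow> continuous_on UNIV (den T t)"
  unfolding den_def[abs_def] by (intro cont_Max cont_lin2) auto

lemma Max_abs_nonneg: "finite A \<Longrightarrow> A \<noteq> {} \<Longrightarrow> 0 \<le> Max ((\<lambda>s. \<bar>f s :: real\<bar>) ` A)"
  by (subst Max_ge_iff) auto

lemma den_nonneg: "t + 1 \<le> T \<Longrightarrow> 0 \<le> den T t x"
  unfolding den_def by (rule Max_abs_nonneg) auto

lemma num_nonneg: "t \<ge> 1 \<Longrightarrow> 0 \<le> num t x"
  unfolding num_def by (rule Max_abs_nonneg) auto

lemma gRd_cont: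
  assumes "d > 0" "T \<ge> 4"
  shows "continuous_on UNIV (gRd T d)"
  unfolding gRd_def[abs_def]
proof (rule cont_Max)
  fix t assume t: "t \<in> {2..T-2}"
  have "continuous_on UNIV (\<lambda>x. max d (den T t x))"
    using t assms by (intro continuous_on_max continuous_on_const den_cont) auto
  then show "continuous_on UNIV (\<lambda>x. num t x / max d (den T t x))"
    using t assms by (intro continuous_on_divide num_cont) auto
qed (use assms in auto)

lemma gR_meas: "T \<ge> 4 \<Longrightarrow> gR T \<in> borel_measurable borel"
  unfolding gR_def[abs_def]
  by (intro borel_measurable_Max borel_measurable_divide borel_measurable_continuous_onI num_cont den_cont) auto

lemma gR_bound:
  assumes d: "d > 0" and T: "T \<ge> 4" and fb: "\<And>y. \<bar>f y\<bar> \<le> 1"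
  shows "\<bar>f (gR T x) - f (gRd T d x)\<bar> \<le> 2 * (\<Sum>t\<in>{2..T-2}. psi (den T t x / d))"
proof (cases "\<forall>t\<in>{2..T-2}. den T t x \<ge> d")
  case True
  then have "gR T x = gRd T d x" unfolding gR_def gRd_def
    by (intro arg_cong[where f=Max] image_cong refl) (simp add: max_def)
  then show ?thesis using psi_ge0 by (simp add: sum_nonneg)
next
  case False
  then obtain t where t: "t \<in> {2..T-2}" "den T t x < d" by auto
  have "0 \<le> den T t x" using t T by (intro den_nonneg) auto
  then have "psi (den T t x / d) = 1" using t d by (intro psi_one) (simp add: abs_divide)
  then have "1 \<le> (\<Sum>t\<in>{2..T-2}. psi (den T t x / d))"
    using t psi_ge0 by (metis finite_atLeastAtMost sum_nonneg_leq_bound member_le_sum) 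
  moreover have "\<bar>f (gR T x) - f (gRd T d x)\<bar> \<le> 2" using fb[of "gR T x"] fb[of "gRd T d x"] by linarith
  ultimately show ?thesis by linarith
qed

lemma Max_const0: "finite A \<Longrightarrow> A \<noteq> {} \<Longrightarrow> (\<And>s. s \<in> A \<Longrightarrow> f s = (0::real)) \<Longrightarrow> Max (f ` A) = 0"
proof -
  assume "finite A" "A \<noteq> {}" "\<And>s. s \<in> A \<Longrightarrow> f s = 0"
  then have "f ` A = {0}" by auto
  then show ?thesis by simp
qed

lemma gR_lin:
  assumes T: "T \<ge> 4" and lin: "\<And>u. u \<in> {1..T} \<Longrightarrow> x u = real u * a"
  shows "gR T x = 0"
proof -
  have "num t x = 0" if t: "t \<in> {2..T-2}" for t
    unfolding num_def using t T by (intro Max_const0) (auto simp: lin)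
  moreover have "den T t x = 0" if t: "t \<in> {2..T-2}" for t
    unfolding den_def
  proof (intro Max_const0)
    fix s assume s: "s \<in> {t..T-1}"
    have nz: "real T - real t \<noteq> 0" using t T by auto
    have xs: "x T = real T * a" "x s = real s * a" "x t = real t * a" using s t T by (auto simp: lin)
    have "(real T - real s) / (real T - real t) * ((real T - real t) * a) = (real T - real s) * a"
      using nz by simp
    then show "\<bar>(x T - x s) - (real T - real s) / (real T - real t) * (x T - x t)\<bar> = 0"
      unfolding xs by (simp add: algebra_simps)
  qed (use t T in auto)
  ultimately show ?thesis unfolding gR_def using T by (intro Max_const0) auto
qed

lemma den0_D:
  assumes t: "t \<in> {2..T-2}" and T: "T \<ge> 4" and d0: "den T t x = 0"
  shows "x (t+2) - 2 * x (t+1) + x t = 0"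
proof -
  have comp0: "(x T - x s) - (real T - real s) / (real T - real t) * (x T - x t) = 0" if s: "s \<in> {t..T-1}" for s
  proof -
    have "\<bar>(x T - x s) - (real T - real s) / (real T - real t) * (x T - x t)\<bar> \<le> den T t x"
      unfolding den_def using s by (intro Max_ge) auto
    then show ?thesis using d0 by simp
  qed
  define k where "k = real T - real t"
  have k: "k \<ge> 2" using t T by (auto simp: k_def)
  have m1: "t+1 \<in> {t..T-1}" using t T by auto
  have c1: "(x T - x (t+1)) - (k - 1) / k * (x T - x t) = 0"
    using comp0[OF m1] t T by (simp add: k_def algebra_simps)
  show ?thesis
  proof (cases "t + 2 \<le> T - 1")
    case True
    have m2: "t+2 \<in> {t..T-1}" using True t T by auto
    have c2: "(x T - x (t+2)) - (k - 2) / k * (x T - x t) = 0"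
      using comp0[OF m2] True t T by (simp add: k_def algebra_simps)
    have a: "x (t+1) - x t = (x T - x t) / k" using c1 k by (simp add: field_simps; simp add: algebra_simps)
    have b: "x (t+2) - x (t+1) = (x T - x t) / k" using c1 c2 k by (simp add: field_simps; simp add: algebra_simps)
    show ?thesis using a b by simp
  next
    case False
    then have Tt: "T = t + 2" using t T by auto
    then have "k = 2" by (simp add: k_def)
    then show ?thesis using c1 Tt by (simp add: field_simps; simp add: algebra_simps)
  qed
qed


lemma Max_cmult:
  assumes "(c::real) \<ge> 0" "finite A" "A \<noteq> {}"
  shows "Max ((\<lambda>x. c * f x) ` A) = c * Max (f ` A)"
proof -
  have "mono ((*) c)" using assms(1) by (auto intro: monoI mult_left_mono)
  then have "c * Max (f ` A) = Max ((*) c ` f ` A)"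
    using assms by (intro mono_Max_commute) auto
  then show ?thesis by (simp add: image_image)
qed

lemma sum_ind1:
  fixes f :: "nat \<Rightarrow> real"
  assumes "finite A" "a \<in> A"
  shows "(\<Sum>u\<in>A. (if u = a then 1 else 0) * f u) = f a"
proof -
  have "(\<Sum>u\<in>A. (if u = a then 1 else 0) * f u) = (\<Sum>u\<in>A. if u = a then f a else 0)"
    by (intro sum.cong) auto
  also have "\<dots> = f a" using assms by (simp only: sum.delta) simp
  finally show ?thesis .
qed

lemma sum_ind3:
  fixes f :: "nat \<Rightarrow> real"
  assumes "finite A" "a \<in> A" "b \<in> A" "e \<in> A"
  shows "(\<Sum>u\<in>A. (\<alpha> * (if u = a then 1 else 0) + \<beta> * (if u = b then 1 else 0) + \<gamma> * (if u = e then 1 else 0)) * f u)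
         = \<alpha> * f a + \<beta> * f b + \<gamma> * f e"
proof -
  have "(\<Sum>u\<in>A. (\<alpha> * (if u = a then 1 else 0) + \<beta> * (if u = b then 1 else 0) + \<gamma> * (if u = e then 1 else 0)) * f u)
      = (\<Sum>u\<in>A. \<alpha> * ((if u = a then 1 else 0) * f u) + \<beta> * ((if u = b then 1 else 0) * f u) + \<gamma> * ((if u = e then 1 else 0) * f u))"
    by (intro sum.cong refl) (simp only: distrib_right mult.assoc)
  also have "\<dots> = \<alpha> * (\<Sum>u\<in>A. (if u = a then 1 else 0) * f u) + \<beta> * (\<Sum>u\<in>A. (if u = b then 1 else 0) * f u)
       + \<gamma> * (\<Sum>u\<in>A. (if u = e then 1 else 0) * f u)"
    by (simp only: sum.distrib sum_distrib_left)
  also have "\<dots> = \<alpha> * f a + \<beta> * f b + \<gamma> * f e" using assms by (simp only: sum_ind1)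
  finally show ?thesis .
qed

context panel begin

lemma eps_tail_sum: "s \<le> T \<Longrightarrow> (\<Sum>r\<in>{s+1..T}. eps i r \<omega>) = Ps i T \<omega> - Ps i s \<omega>"
proof -
  assume s: "s \<le> T"
  have "{1..T} = {1..s} \<union> {s+1..T}" using s by auto
  then have "Ps i T \<omega> = Ps i s \<omega> + (\<Sum>r\<in>{s+1..T}. eps i r \<omega>)"
    unfolding Ps_def by (simp add: sum.union_disjoint ivl_disj_int)
  then show ?thesis by simp
qed

lemma Y_eq: "s \<le> T \<Longrightarrow> panelY mu delta T sig eps i s \<omega> = mu i + sig * eps i s \<omega>"
  by (simp add: panelY_def)

lemma Ybar_eq:
  assumes "1 \<le> u" "u \<le> T"
  shows "Ybar (panelY mu delta T sig eps) i u \<omega> = mu i + sig * Ps i u \<omega> / real u"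
proof -
  have "(\<Sum>s\<in>{1..u}. panelY mu delta T sig eps i s \<omega>) = (\<Sum>s\<in>{1..u}. mu i + sig * eps i s \<omega>)"
    using assms by (intro sum.cong) (auto simp: Y_eq)
  also have "\<dots> = real u * mu i + sig * Ps i u \<omega>"
    by (simp add: sum.distrib Ps_def sum_distrib_left)
  finally show ?thesis unfolding Ybar_def using assms by (simp add: field_simps)
qed

lemma Ytil_eq:
  assumes "t < T"
  shows "Ytil T (panelY mu delta T sig eps) i t \<omega> = mu i + sig * (Ps i T \<omega> - Ps i t \<omega>) / (real T - real t)"
proof -
  have "(\<Sum>s\<in>{t+1..T}. panelY mu delta T sig eps i s \<omega>) = (\<Sum>s\<in>{t+1..T}. mu i + sig * eps i s \<omega>)"
    by (intro sum.cong) (auto simp: Y_eq)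
  also have "\<dots> = (real T - real t) * mu i + sig * (Ps i T \<omega> - Ps i t \<omega>)"
    using assms eps_tail_sum[where s=t and i=i and \<omega>=\<omega>] by (simp add: sum.distrib sum_distrib_left[symmetric] of_nat_diff)
  finally show ?thesis unfolding Ytil_def using assms by (simp add: field_simps)
qed

lemma sum_num:
  assumes "1 \<le> u" "u \<le> T" "s \<le> T"
  shows "(\<Sum>r\<in>{1..s}. panelY mu delta T sig eps i r \<omega> - Ybar (panelY mu delta T sig eps) i u \<omega>)
         = sig * (Ps i s \<omega> - real s / real u * Ps i u \<omega>)"
proof -
  have "(\<Sum>r\<in>{1..s}. panelY mu delta T sig eps i r \<omega> - Ybar (panelY mu delta T sig eps) i u \<omega>)
      = (\<Sum>r\<in>{1..s}. sig * eps i r \<omega> - sig * Ps i u \<omega> / real u)"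
    using assms by (intro sum.cong) (auto simp: Y_eq Ybar_eq)
  also have "\<dots> = sig * (Ps i s \<omega> - real s / real u * Ps i u \<omega>)"
    by (simp add: sum_subtractf Ps_def sum_distrib_left sum_divide_distrib algebra_simps)
  finally show ?thesis .
qed

lemma sum_den:
  assumes "t < T" "s \<le> T"
  shows "(\<Sum>r\<in>{s+1..T}. panelY mu delta T sig eps i r \<omega> - Ytil T (panelY mu delta T sig eps) i t \<omega>)
         = sig * ((Ps i T \<omega> - Ps i s \<omega>) - (real T - real s) / (real T - real t) * (Ps i T \<omega> - Ps i t \<omega>))"
proof -
  have "(\<Sum>r\<in>{s+1..T}. panelY mu delta T sig eps i r \<omega> - Ytil T (panelY mu delta T sig eps) i t \<omega>)
      = (\<Sum>r\<in>{s+1..T}. sig * eps i r \<omega> - sig * (Ps i T \<omega> - Ps i t \<omega>) / (real T - real t))"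
    using assms by (intro sum.cong) (auto simp: Y_eq Ytil_eq)
  also have "\<dots> = sig * (Ps i T \<omega> - Ps i s \<omega>) - (real T - real s) * (sig * (Ps i T \<omega> - Ps i t \<omega>) / (real T - real t))"
    using assms eps_tail_sum[where s=s and i=i and \<omega>=\<omega>] by (simp add: sum_subtractf sum_distrib_left[symmetric] of_nat_diff)
  also have "\<dots> = sig * ((Ps i T \<omega> - Ps i s \<omega>) - (real T - real s) / (real T - real t) * (Ps i T \<omega> - Ps i t \<omega>))"
    by (simp add: algebra_simps)
  finally show ?thesis .
qed

end

lemma approx_lim:
  fixes a :: "nat \<Rightarrow> real" and b c :: "nat \<Rightarrow> nat \<Rightarrow> real"
  assumes b: "\<And>k. (\<lambda>N. b k N) \<longlonglongrightarrow> b' k" and c: "\<And>k. (\<lambda>N. c k N) \<longlonglongrightarrow> c' k"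
  and ab: "\<And>k N. \<bar>a N - b k N\<bar> \<le> c k N" and ab': "\<And>k. \<bar>a' - b' k\<bar> \<le> c' k"
  and c0: "c' \<longlonglongrightarrow> 0"
  shows "a \<longlonglongrightarrow> a'"
proof (rule LIMSEQ_I)
  fix r :: real assume r: "0 < r"
  have "eventually (\<lambda>k. \<bar>c' k\<bar> < r/4) sequentially"
  proof -
    have "r/4 > 0" using r by simp
    then have "eventually (\<lambda>k. dist (c' k) 0 < r/4) sequentially" using c0 by (intro tendstoD)
    then show ?thesis by (simp add: dist_real_def)
  qed
  then obtain k where k: "\<bar>c' k\<bar> < r/4" by (auto simp: eventually_sequentially)
  have r4: "r/4 > 0" using r by simp
  have "eventually (\<lambda>N. dist (b k N) (b' k) < r/4) sequentially" using b[of k] r4 by (intro tendstoD)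
  then have e1: "eventually (\<lambda>N. \<bar>b k N - b' k\<bar> < r/4) sequentially" by (simp add: dist_real_def)
  have "eventually (\<lambda>N. dist (c k N) (c' k) < r/4) sequentially" using c[of k] r4 by (intro tendstoD)
  then have e2: "eventually (\<lambda>N. \<bar>c k N - c' k\<bar> < r/4) sequentially" by (simp add: dist_real_def)
  obtain N0 where N0: "\<And>N. N \<ge> N0 \<Longrightarrow> \<bar>b k N - b' k\<bar> < r/4 \<and> \<bar>c k N - c' k\<bar> < r/4"
    using eventually_conj[OF e1 e2] by (auto simp: eventually_sequentially)
  show "\<exists>no. \<forall>n\<ge>no. norm (a n - a') < r"
  proof (intro exI allI impI)
    fix N assume "N0 \<le> N"
    with N0 have n: "\<bar>b k N - b' k\<bar> < r/4" "\<bar>c k N - c' k\<bar> < r/4" by auto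
    have "\<bar>a N - a'\<bar> \<le> \<bar>a N - b k N\<bar> + \<bar>b k N - b' k\<bar> + \<bar>a' - b' k\<bar>" by linarith
    also have "\<dots> < r" using ab[of N k] ab'[of k] n k by linarith
    finally show "norm (a N - a') < r" by simp
  qed
qed

context panel begin

lemma rho0': "T \<ge> 1 \<Longrightarrow> rho 0 = 1" by (rule rho0)

lemma diff_sq:
  assumes "i \<ge> 1" "a \<in> {1..T}" "b \<in> {1..T}"
  shows "(\<integral>\<omega>. (eps i a \<omega> - eps i b \<omega>)\<^sup>2 \<partial>M) = 2 - 2 * rho (ndist a b)"
    and "integrable M (\<lambda>\<omega>. (eps i a \<omega> - eps i b \<omega>)\<^sup>2)"
proof -
  have T1: "T \<ge> 1" using assms by auto
  have e: "(eps i a \<omega> - eps i b \<omega>)\<^sup>2 = eps i a \<omega> * eps i a \<omega> - 2 * (eps i a \<omega> * eps i b \<omega>) + eps i b \<omega> * eps i b \<omega>" for \<omega>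
    by (simp add: power2_eq_square algebra_simps)
  have ia: "integrable M (\<lambda>\<omega>. eps i a \<omega> * eps i a \<omega>)" and ib: "integrable M (\<lambda>\<omega>. eps i b \<omega> * eps i b \<omega>)"
    and iab: "integrable M (\<lambda>\<omega>. eps i a \<omega> * eps i b \<omega>)" using prod_int assms by auto
  show "integrable M (\<lambda>\<omega>. (eps i a \<omega> - eps i b \<omega>)\<^sup>2)" unfolding e using ia ib iab by auto
  have "(\<integral>\<omega>. (eps i a \<omega> - eps i b \<omega>)\<^sup>2 \<partial>M) =
      (\<integral>\<omega>. eps i a \<omega> * eps i a \<omega> \<partial>M) - 2 * (\<integral>\<omega>. eps i a \<omega> * eps i b \<omega> \<partial>M) + (\<integral>\<omega>. eps i b \<omega> * eps i b \<omega> \<partial>M)"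
    unfolding e using ia ib iab by (simp add: Bochner_Integration.integral_add Bochner_Integration.integral_diff)
  also have "\<dots> = 2 - 2 * rho (ndist a b)"
    using assms cov_eps[of i a a] cov_eps[of i b b] cov_eps[of i a b] rho0'[OF T1] by (simp add: ndist_def)
  finally show "(\<integral>\<omega>. (eps i a \<omega> - eps i b \<omega>)\<^sup>2 \<partial>M) = 2 - 2 * rho (ndist a b)" .
qed

lemma AE_eq_of_sq0:
  assumes "integrable M (\<lambda>\<omega>. (f \<omega> :: real)\<^sup>2)" "(\<integral>\<omega>. (f \<omega>)\<^sup>2 \<partial>M) = 0"
  shows "AE \<omega> in M. f \<omega> = 0"
proof -
  have "AE \<omega> in M. (f \<omega>)\<^sup>2 = 0" using integral_nonneg_eq_0_iff_AE[OF assms(1)] assms(2) by simp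
  then show ?thesis by simp
qed

lemma epsA:
  assumes r1: "rho 1 = 1" and i: "i \<ge> 1"
  shows "s \<in> {1..T} \<Longrightarrow> AE \<omega> in M. eps i s \<omega> = eps i 1 \<omega>"
proof (induction s)
  case 0 then show ?case by simp
next
  case (Suc s)
  show ?case
  proof (cases "s = 0")
    case True then show ?thesis by simp
  next
    case False
    then have s: "s \<in> {1..T}" "Suc s \<in> {1..T}" using Suc.prems by auto
    have "(\<integral>\<omega>. (eps i (Suc s) \<omega> - eps i s \<omega>)\<^sup>2 \<partial>M) = 0"
      using diff_sq(1)[OF i s(2) s(1)] r1 by (simp add: ndist_def)
    then have "AE \<omega> in M. eps i (Suc s) \<omega> - eps i s \<omega> = 0"
      by (intro AE_eq_of_sq0 diff_sq(2)[OF i s(2) s(1)])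
    then show ?thesis using Suc.IH[OF s(1)] by eventually_elim linarith
  qed
qed

lemma PsA:
  assumes r1: "rho 1 = 1" and i: "i \<ge> 1" and u: "u \<in> {1..T}"
  shows "AE \<omega> in M. Ps i u \<omega> = real u * eps i 1 \<omega>"
proof -
  have "AE \<omega> in M. \<forall>s\<in>{1..u}. eps i s \<omega> = eps i 1 \<omega>"
    by (rule AE_finite_allI) (use epsA[OF r1 i] u in auto)
  then show ?thesis unfolding Ps_def
  proof eventually_elim
    case (elim \<omega>)
    then have "(\<Sum>s\<in>{1..u}. eps i s \<omega>) = (\<Sum>s\<in>{1..u}. eps i 1 \<omega>)" by (intro sum.cong refl) blast
    then show ?case by simp
  qed
qed

definition Sm :: "nat \<Rightarrow> 'a \<Rightarrow> nat \<Rightarrow> real" where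
  "Sm N \<omega> t = (\<Sum>i\<in>{1..N}. Ps i t \<omega>)"

definition Vv :: "nat \<Rightarrow> 'a \<Rightarrow> nat \<Rightarrow> real" where
  "Vv N \<omega> = (\<lambda>t. if t \<in> {1..T} then Sm N \<omega> t / sqrt N else 0)"

lemma Sm_V: "t \<in> {1..T} \<Longrightarrow> Sm N \<omega> t = sqrt N * Vv N \<omega> t"
  by (cases "N = 0") (auto simp: Vv_def Sm_def)

lemma Vv0: "Vv 0 \<omega> = (\<lambda>_. 0)"
  by (auto simp: Vv_def)

lemma Vv_meas: "Vv N \<in> borel_measurable M"
proof (rule measurable_coordinatewise_then_product)
  fix t
  show "(\<lambda>\<omega>. Vv N \<omega> t) \<in> borel_measurable M"
  proof (cases "t \<in> {1..T}")
    case True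
    have "(\<lambda>\<omega>. Vv N \<omega> t) = (\<lambda>\<omega>. (\<Sum>i\<in>{1..N}. Ps i t \<omega>) / sqrt N)"
      using True by (simp add: Vv_def Sm_def)
    moreover have "(\<lambda>\<omega>. (\<Sum>i\<in>{1..N}. Ps i t \<omega>) / sqrt N) \<in> borel_measurable M"
      using Ps_meas True by (intro borel_measurable_divide borel_measurable_sum borel_measurable_const) auto
    ultimately show ?thesis by simp
  next
    case False
    then have "(\<lambda>\<omega>. Vv N \<omega> t) = (\<lambda>\<omega>. 0)" by (force simp: Vv_def)
    then show ?thesis by simp
  qed
qed

lemma ch_V:
  assumes T1: "T \<ge> 1"
  shows "(\<lambda>N. CLINT \<omega>|M. iexp (\<Sum>t\<in>{1..T}. c t * Vv N \<omega> t)) \<longlonglongrightarrow> complex_of_real (exp (- Qf c / 2))"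
proof -
  have "(\<Sum>t\<in>{1..T}. c t * Vv N \<omega> t) = (\<Sum>i\<in>{1..N}. Wc c i \<omega>) / sqrt N" for N \<omega>
  proof -
    have "(\<Sum>t\<in>{1..T}. c t * Vv N \<omega> t) = (\<Sum>t\<in>{1..T}. \<Sum>i\<in>{1..N}. c t * Ps i t \<omega>) / sqrt N"
      unfolding Vv_def Sm_def by (simp add: sum_divide_distrib sum_distrib_left)
    also have "\<dots> = (\<Sum>i\<in>{1..N}. Wc c i \<omega>) / sqrt N"
      unfolding Wc_def by (subst sum.swap) simp
    finally show ?thesis .
  qed
  then show ?thesis using char_conv[OF T1, of c] by simp
qed

lemma statC_eq:
  assumes T: "T \<ge> 2" and sig: "sig > 0"
  shows "statC T (panelY mu delta T sig eps) N \<omega> = gC T sig (Vv N \<omega>)"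
proof -
  let ?Y = "panelY mu delta T sig eps"
  have inner: "\<bar>\<Sum>i\<in>{1..N}. \<Sum>s\<in>{1..t}. (?Y i s \<omega> - Ybar ?Y i T \<omega>)\<bar>
      = (sig * sqrt N) * \<bar>Vv N \<omega> t - real t / real T * Vv N \<omega> T\<bar>" if t: "t \<in> {1..T-1}" for t
  proof -
    have "(\<Sum>i\<in>{1..N}. \<Sum>s\<in>{1..t}. (?Y i s \<omega> - Ybar ?Y i T \<omega>)) = (\<Sum>i\<in>{1..N}. sig * (Ps i t \<omega> - real t / real T * Ps i T \<omega>))"
      using t T by (intro sum.cong refl sum_num) auto
    also have "\<dots> = sig * (Sm N \<omega> t - real t / real T * Sm N \<omega> T)"
      unfolding Sm_def by (simp add: sum_subtractf sum_distrib_left right_diff_distrib)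
    also have "\<dots> = (sig * sqrt N) * (Vv N \<omega> t - real t / real T * Vv N \<omega> T)"
    proof -
      have tt: "t \<in> {1..T}" "T \<in> {1..T}" using t T by auto
      show ?thesis by (simp add: Sm_V[OF tt(1)] Sm_V[OF tt(2)] algebra_simps)
    qed
    finally show ?thesis using sig by (simp add: abs_mult)
  qed
  have "statC T ?Y N \<omega> = (1 / sqrt N) * ((sig * sqrt N) * Max ((\<lambda>t. \<bar>Vv N \<omega> t - real t / real T * Vv N \<omega> T\<bar>) ` {1..T-1}))"
    unfolding statC_def using T sig by (simp only: inner cong: image_cong) (subst Max_cmult, auto)
  also have "\<dots> = gC T sig (Vv N \<omega>)"
  proof (cases "N = 0")
    case True
    have "Max ((\<lambda>t. \<bar>Vv N \<omega> t - real t / real T * Vv N \<omega> T\<bar>) ` {1..T-1}) = 0"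
      using T True by (intro Max_const0) (auto simp: Vv0)
    then show ?thesis using True by (simp add: gC_def)
  qed (simp add: gC_def)
  finally show ?thesis .
qed

end

definition Gv :: "nat \<Rightarrow> (nat \<Rightarrow> 'b \<Rightarrow> real) \<Rightarrow> 'b \<Rightarrow> nat \<Rightarrow> real" where
  "Gv T X \<omega> = (\<lambda>t. if t \<in> {1..T} then X t \<omega> else 0)"

lemma limC_eq: "T \<ge> 2 \<Longrightarrow> limC T sig X \<omega> = gC T sig (Gv T X \<omega>)"
  unfolding limC_def gC_def Gv_def
  by (intro arg_cong[where f="\<lambda>m. sig * m"] arg_cong[where f=Max] image_cong refl) auto

lemma limR_eq: "T \<ge> 4 \<Longrightarrow> limR T X \<omega> = gR T (Gv T X \<omega>)"
  unfolding limR_def gR_def num_def den_def Gv_def Let_def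
  by (intro arg_cong[where f=Max] image_cong refl arg_cong2[where f="(/)"]) auto

context panel begin

lemma statR_eq:
  assumes T: "T \<ge> 4" and sig: "sig > 0"
  shows "statR T (panelY mu delta T sig eps) N \<omega> = gR T (Vv N \<omega>)"
proof -
  let ?Y = "panelY mu delta T sig eps"
  define c where "c = sig * sqrt N"
  have c0: "c \<ge> 0" using sig by (simp add: c_def)
  have numS: "Max ((\<lambda>s. \<bar>\<Sum>i\<in>{1..N}. \<Sum>r\<in>{1..s}. (?Y i r \<omega> - Ybar ?Y i t \<omega>)\<bar>) ` {1..t}) = c * num t (Vv N \<omega>)"
    if t: "t \<in> {2..T-2}" for t
  proof -
    have inner: "\<bar>\<Sum>i\<in>{1..N}. \<Sum>r\<in>{1..s}. (?Y i r \<omega> - Ybar ?Y i t \<omega>)\<bar> = c * \<bar>Vv N \<omega> s - real s / real t * Vv N \<omega> t\<bar>"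
      if s: "s \<in> {1..t}" for s
    proof -
      have tt: "s \<in> {1..T}" "t \<in> {1..T}" using s t T by auto
      have "(\<Sum>i\<in>{1..N}. \<Sum>r\<in>{1..s}. (?Y i r \<omega> - Ybar ?Y i t \<omega>)) = (\<Sum>i\<in>{1..N}. sig * (Ps i s \<omega> - real s / real t * Ps i t \<omega>))"
        using tt by (intro sum.cong refl sum_num) auto
      also have "\<dots> = sig * (Sm N \<omega> s - real s / real t * Sm N \<omega> t)"
        unfolding Sm_def by (simp add: sum_subtractf sum_distrib_left right_diff_distrib)
      also have "\<dots> = c * (Vv N \<omega> s - real s / real t * Vv N \<omega> t)"
        by (simp add: Sm_V[OF tt(1)] Sm_V[OF tt(2)] c_def algebra_simps)
      finally show ?thesis using c0 by (simp add: abs_mult)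
    qed
    have "Max ((\<lambda>s. \<bar>\<Sum>i\<in>{1..N}. \<Sum>r\<in>{1..s}. (?Y i r \<omega> - Ybar ?Y i t \<omega>)\<bar>) ` {1..t})
        = Max ((\<lambda>s. c * \<bar>Vv N \<omega> s - real s / real t * Vv N \<omega> t\<bar>) ` {1..t})"
      using inner by (intro arg_cong[where f=Max] image_cong refl) auto
    also have "\<dots> = c * num t (Vv N \<omega>)" unfolding num_def using c0 t by (intro Max_cmult) auto
    finally show ?thesis .
  qed
  have denS: "Max ((\<lambda>s. \<bar>\<Sum>i\<in>{1..N}. \<Sum>r\<in>{s+1..T}. (?Y i r \<omega> - Ytil T ?Y i t \<omega>)\<bar>) ` {t..T-1}) = c * den T t (Vv N \<omega>)"
    if t: "t \<in> {2..T-2}" for t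
  proof -
    have inner: "\<bar>\<Sum>i\<in>{1..N}. \<Sum>r\<in>{s+1..T}. (?Y i r \<omega> - Ytil T ?Y i t \<omega>)\<bar>
       = c * \<bar>(Vv N \<omega> T - Vv N \<omega> s) - (real T - real s) / (real T - real t) * (Vv N \<omega> T - Vv N \<omega> t)\<bar>"
      if s: "s \<in> {t..T-1}" for s
    proof -
      have tt: "s \<in> {1..T}" "t \<in> {1..T}" "T \<in> {1..T}" using s t T by auto
      have "(\<Sum>i\<in>{1..N}. \<Sum>r\<in>{s+1..T}. (?Y i r \<omega> - Ytil T ?Y i t \<omega>))
          = (\<Sum>i\<in>{1..N}. sig * ((Ps i T \<omega> - Ps i s \<omega>) - (real T - real s) / (real T - real t) * (Ps i T \<omega> - Ps i t \<omega>)))"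
        using s t T by (intro sum.cong refl sum_den) auto
      also have "\<dots> = sig * ((Sm N \<omega> T - Sm N \<omega> s) - (real T - real s) / (real T - real t) * (Sm N \<omega> T - Sm N \<omega> t))"
        unfolding Sm_def by (simp add: sum_subtractf sum_distrib_left right_diff_distrib)
      also have "\<dots> = c * ((Vv N \<omega> T - Vv N \<omega> s) - (real T - real s) / (real T - real t) * (Vv N \<omega> T - Vv N \<omega> t))"
        by (simp add: Sm_V[OF tt(1)] Sm_V[OF tt(2)] Sm_V[OF tt(3)] c_def algebra_simps)
      finally show ?thesis using c0 by (simp add: abs_mult)
    qed
    have "Max ((\<lambda>s. \<bar>\<Sum>i\<in>{1..N}. \<Sum>r\<in>{s+1..T}. (?Y i r \<omega> - Ytil T ?Y i t \<omega>)\<bar>) ` {t..T-1})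
        = Max ((\<lambda>s. c * \<bar>(Vv N \<omega> T - Vv N \<omega> s) - (real T - real s) / (real T - real t) * (Vv N \<omega> T - Vv N \<omega> t)\<bar>) ` {t..T-1})"
      using inner by (intro arg_cong[where f=Max] image_cong refl) auto
    also have "\<dots> = c * den T t (Vv N \<omega>)" unfolding den_def using c0 t T by (intro Max_cmult) auto
    finally show ?thesis .
  qed
  have "statR T ?Y N \<omega> = Max ((\<lambda>t. (c * num t (Vv N \<omega>)) / (c * den T t (Vv N \<omega>))) ` {2..T-2})"
    unfolding statR_def using numS denS by (intro arg_cong[where f=Max] image_cong refl) auto
  also have "\<dots> = gR T (Vv N \<omega>)"
  proof (cases "N = 0")
    case True
    have n0: "num t (Vv N \<omega>) = 0" if "t \<in> {2..T-2}" for t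
      unfolding num_def using that True by (intro Max_const0) (auto simp: Vv0)
    have "Max ((\<lambda>t. (c * num t (Vv N \<omega>)) / (c * den T t (Vv N \<omega>))) ` {2..T-2}) = 0"
      using T n0 by (intro Max_const0) auto
    moreover have "gR T (Vv N \<omega>) = 0"
      unfolding gR_def using T n0 by (intro Max_const0) auto
    ultimately show ?thesis by simp
  next
    case False
    then have "c > 0" using sig by (simp add: c_def)
    then show ?thesis unfolding gR_def by (intro arg_cong[where f=Max] image_cong refl) simp
  qed
  finally show ?thesis .
qed

end

lemma Gv_meas:
  assumes g: "centered_mvnormal P X T L"
  shows "Gv T X \<in> borel_measurable P"
proof (rule measurable_coordinatewise_then_product)
  fix t
  show "(\<lambda>\<omega>. Gv T X \<omega> t) \<in> borel_measurable P"
  proof (cases "t \<in> {1..T}")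
    case True
    then have "(\<lambda>\<omega>. Gv T X \<omega> t) = X t" by (simp add: Gv_def)
    then show ?thesis using g True unfolding centered_mvnormal_def by simp
  next
    case False
    then have "(\<lambda>\<omega>. Gv T X \<omega> t) = (\<lambda>\<omega>. 0)" by (force simp: Gv_def)
    then show ?thesis by simp
  qed
qed

context panel begin

lemma MV_panel:
  fixes h :: "(nat \<Rightarrow> real) \<Rightarrow> real"
  assumes T1: "T \<ge> 1" and g: "centered_mvnormal P X T (Lam rho)"
  and hc: "continuous_on UNIV h" and hb: "\<And>x. \<bar>h x\<bar> \<le> B"
  shows "(\<lambda>N. \<integral>\<omega>. h (Vv N \<omega>) \<partial>M) \<longlonglongrightarrow> (\<integral>\<omega>. h (Gv T X \<omega>) \<partial>P)"
proof (rule MV[where I="{1..T}" and V=Vv and G="Gv T X" and M=M and P=P and h=h])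
  show "prob_space M" by (rule prob_space_axioms)
  show "prob_space P" using g unfolding centered_mvnormal_def by blast
  show "finite {1..T}" by simp
  show "Vv N \<in> borel_measurable M" for N by (rule Vv_meas)
  show "Gv T X \<in> borel_measurable P" by (rule Gv_meas[OF g])
  show "Vv N \<omega> t = 0" if "t \<notin> {1..T}" for N \<omega> t using that unfolding Vv_def by (simp only: if_False)
  show "Gv T X \<omega> t = 0" if "t \<notin> {1..T}" for \<omega> t using that unfolding Gv_def by (simp only: if_False)
  show "(\<lambda>N. CLINT \<omega>|M. iexp (\<Sum>t\<in>{1..T}. c t * Vv N \<omega> t)) \<longlonglongrightarrow> (CLINT \<omega>|P. iexp (\<Sum>t\<in>{1..T}. c t * Gv T X \<omega> t))" for c
  proof -
    have "(\<Sum>t\<in>{1..T}. c t * Gv T X \<omega> t) = (\<Sum>t\<in>{1..T}. c t * X t \<omega>)" for \<omega>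
      by (intro sum.cong refl) (simp add: Gv_def)
    moreover have "(CLINT \<omega>|P. iexp (\<Sum>t\<in>{1..T}. c t * X t \<omega>)) = complex_of_real (exp (- Qf c / 2))"
      using g unfolding centered_mvnormal_def Qf_def by blast
    ultimately show ?thesis using ch_V[OF T1] by simp
  qed
  show "continuous_on UNIV h" by (rule hc)
  show "\<bar>h x\<bar> \<le> B" for x by (rule hb)
qed

lemma caseA_M:
  assumes T: "T \<ge> 4" and r1: "rho 1 = 1"
  shows "AE \<omega> in M. gR T (Vv N \<omega>) = 0"
proof -
  have "AE \<omega> in M. \<forall>i\<in>{1..N}. \<forall>u\<in>{1..T}. Ps i u \<omega> = real u * eps i 1 \<omega>"
    by (intro AE_finite_allI) (use PsA[OF r1] in auto)
  then show ?thesis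
  proof eventually_elim
    case (elim \<omega>)
    show ?case
    proof (rule gR_lin[OF T])
      fix u assume u: "u \<in> {1..T}"
      have "Sm N \<omega> u = (\<Sum>i\<in>{1..N}. real u * eps i 1 \<omega>)"
        unfolding Sm_def using elim u by (intro sum.cong refl) blast
      then show "Vv N \<omega> u = real u * ((\<Sum>i\<in>{1..N}. eps i 1 \<omega>) / sqrt N)"
        using u by (simp add: Vv_def sum_distrib_left)
    qed
  qed
qed

lemma Ps1: "Ps i 1 \<omega> = eps i 1 \<omega>" "Ps i (Suc 0) \<omega> = eps i (Suc 0) \<omega>" by (simp_all add: Ps_def)

lemma caseA_P:
  assumes T: "T \<ge> 4" and r1: "rho 1 = 1" and g: "centered_mvnormal P X T (Lam rho)"
  shows "AE \<omega> in P. gR T (Gv T X \<omega>) = 0"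
proof -
  interpret Pp: prob_space P using g unfolding centered_mvnormal_def by blast
  have lin: "AE \<omega> in P. X u \<omega> = real u * X 1 \<omega>" if u: "u \<in> {1..T}" for u
  proof -
    define cu where "cu t = 1 * (if t = u then 1 else 0) + (- real u) * (if t = 1 then 1 else 0) + 0 * (if t = 1 then 1 else 0)" for t :: nat
    have sumf: "(\<Sum>t\<in>{1..T}. cu t * f t) = f u - real u * f 1" for f :: "nat \<Rightarrow> real"
      unfolding cu_def using u by (subst sum_ind3) auto
    have W0: "AE \<omega> in M. Wc cu 1 \<omega> = 0"
    proof -
      have "AE \<omega> in M. Ps 1 u \<omega> = real u * eps 1 1 \<omega>" by (rule PsA[OF r1 _ u]) simp
      then show ?thesis unfolding Wc_def sumf by eventually_elim (simp add: Ps1)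
    qed
    have "Qf cu = (\<integral>\<omega>. (Wc cu 1 \<omega>)\<^sup>2 \<partial>M)" by (rule Wc_var[symmetric]) simp
    also have "\<dots> = (\<integral>\<omega>. 0 \<partial>M)"
      using W0 Wc_meas[of 1 cu] by (intro integral_cong_AE) auto
    finally have "Qf cu = 0" by simp
    then have "AE \<omega> in P. (\<Sum>t\<in>{1..T}. cu t * X t \<omega>) = 0"
      by (intro gauss_lin(1)[OF g]) (simp add: Qf_def)
    then show ?thesis unfolding sumf by eventually_elim simp
  qed
  have "AE \<omega> in P. \<forall>u\<in>{1..T}. X u \<omega> = real u * X 1 \<omega>"
    by (intro AE_finite_allI) (use lin in auto)
  then show ?thesis
  proof eventually_elim
    case (elim \<omega>)
    show ?case
    proof (rule gR_lin[OF T, where a="X 1 \<omega>"])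
      fix u assume u: "u \<in> {1..T}"
      have "X u \<omega> = real u * X 1 \<omega>" using elim u by blast
      then show "Gv T X \<omega> u = real u * X 1 \<omega>" using u by (simp add: Gv_def)
    qed
  qed
qed

lemma caseB_P:
  assumes T: "T \<ge> 4" and r1: "rho 1 \<noteq> 1" and g: "centered_mvnormal P X T (Lam rho)"
  and t: "t \<in> {2..T-2}"
  shows "AE \<omega> in P. den T t (Gv T X \<omega>) \<noteq> 0"
proof -
  define c where "c u = (1::real) * (if u = t+2 then 1 else 0) + (-2) * (if u = t+1 then 1 else 0) + 1 * (if u = t then 1 else 0)" for u :: nat
  have mem: "t+2 \<in> {1..T}" "t+1 \<in> {1..T}" "t \<in> {1..T}" using t T by auto
  have sumf: "(\<Sum>u\<in>{1..T}. c u * f u) = f (t+2) - 2 * f (t+1) + f t" for f :: "nat \<Rightarrow> real"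
    unfolding c_def using mem by (subst sum_ind3) auto
  have W: "Wc c 1 \<omega> = eps 1 (t+2) \<omega> - eps 1 (t+1) \<omega>" for \<omega>
  proof -
    have "Ps 1 (t+2) \<omega> = Ps 1 (t+1) \<omega> + eps 1 (t+2) \<omega>" "Ps 1 (t+1) \<omega> = Ps 1 t \<omega> + eps 1 (t+1) \<omega>"
      unfolding Ps_def by (simp_all add: add.commute)
    then show ?thesis unfolding Wc_def sumf by simp
  qed
  have "Qf c = (\<integral>\<omega>. (Wc c 1 \<omega>)\<^sup>2 \<partial>M)" by (rule Wc_var[symmetric]) simp
  also have "\<dots> = 2 - 2 * rho (ndist (t+2) (t+1))" unfolding W by (rule diff_sq(1)) (use mem in auto)
  also have "\<dots> = 2 - 2 * rho 1" by (simp add: ndist_def)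
  finally have q: "Qf c = 2 - 2 * rho 1" .
  have "Qf c \<ge> 0" using Qf_nonneg T by simp
  then have "Qf c > 0" using q r1 by linarith
  then have "AE \<omega> in P. (\<Sum>u\<in>{1..T}. c u * X u \<omega>) \<noteq> 0"
    by (intro gauss_lin(2)[OF g]) (simp add: Qf_def)
  then show ?thesis
  proof eventually_elim
    case (elim \<omega>)
    show ?case
    proof
      assume "den T t (Gv T X \<omega>) = 0"
      from den0_D[OF t T this] have "Gv T X \<omega> (t+2) - 2 * Gv T X \<omega> (t+1) + Gv T X \<omega> t = 0" .
      then have "X (t+2) \<omega> - 2 * X (t+1) \<omega> + X t \<omega> = 0" using mem by (simp add: Gv_def)
      then show False using elim unfolding sumf by simp
    qed
  qed
qed

end

lemma cont_comp_isCont: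
  fixes f :: "real \<Rightarrow> real"
  assumes "\<And>x. isCont f x" "continuous_on UNIV g"
  shows "continuous_on UNIV (\<lambda>x. f (g x))"
proof -
  have "continuous_on UNIV f" using assms(1) by (intro continuous_at_imp_continuous_on) auto
  then show ?thesis by (rule continuous_on_compose2[OF _ assms(2)]) auto
qed

lemma isCont_meas: "(\<And>x. isCont (f :: real \<Rightarrow> real) x) \<Longrightarrow> f \<in> borel_measurable borel"
  by (intro borel_measurable_continuous_onI continuous_at_imp_continuous_on) auto

lemma bdd_integrable:
  fixes F :: "(nat \<Rightarrow> real) \<Rightarrow> real"
  assumes "prob_space Q" "W \<in> borel_measurable Q" "F \<in> borel_measurable borel" "\<And>x. \<bar>F x\<bar> \<le> B"
  shows "integrable Q (\<lambda>\<omega>. F (W \<omega>))"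
proof -
  interpret prob_space Q by fact
  have "(\<lambda>\<omega>. F (W \<omega>)) \<in> borel_measurable Q" using assms(2,3) by (rule measurable_compose)
  then show ?thesis by (intro integrable_const_bound[where B=B]) (use assms(4) in auto)
qed

lemma int_diff_bound:
  fixes F H :: "(nat \<Rightarrow> real) \<Rightarrow> real" and K :: "nat \<Rightarrow> (nat \<Rightarrow> real) \<Rightarrow> real"
  assumes Q: "prob_space Q" and A: "finite A"
  and iF: "integrable Q (\<lambda>\<omega>. F (W \<omega>))" and iH: "integrable Q (\<lambda>\<omega>. H (W \<omega>))"
  and iK: "\<And>t. t \<in> A \<Longrightarrow> integrable Q (\<lambda>\<omega>. K t (W \<omega>))"
  and bd: "\<And>x. \<bar>F x - H x\<bar> \<le> 2 * (\<Sum>t\<in>A. K t x)"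
  shows "\<bar>(\<integral>\<omega>. F (W \<omega>) \<partial>Q) - (\<integral>\<omega>. H (W \<omega>) \<partial>Q)\<bar> \<le> 2 * (\<Sum>t\<in>A. \<integral>\<omega>. K t (W \<omega>) \<partial>Q)"
proof -
  have si: "integrable Q (\<lambda>\<omega>. 2 * (\<Sum>t\<in>A. K t (W \<omega>)))"
    using iK by (intro integrable_mult_right Bochner_Integration.integrable_sum) auto
  have "\<bar>(\<integral>\<omega>. F (W \<omega>) \<partial>Q) - (\<integral>\<omega>. H (W \<omega>) \<partial>Q)\<bar> = \<bar>\<integral>\<omega>. F (W \<omega>) - H (W \<omega>) \<partial>Q\<bar>"
    using iF iH by (simp add: Bochner_Integration.integral_diff)
  also have "\<dots> \<le> (\<integral>\<omega>. \<bar>F (W \<omega>) - H (W \<omega>)\<bar> \<partial>Q)" by (rule integral_abs_bound)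
  also have "\<dots> \<le> (\<integral>\<omega>. 2 * (\<Sum>t\<in>A. K t (W \<omega>)) \<partial>Q)"
    by (rule integral_mono[OF _ si]) (use iF iH bd in auto)
  also have "\<dots> = 2 * (\<Sum>t\<in>A. \<integral>\<omega>. K t (W \<omega>) \<partial>Q)"
    using iK by (simp add: Bochner_Integration.integral_sum)
  finally show ?thesis .
qed

lemma psi_den_cont: "d > 0 \<Longrightarrow> t + 1 \<le> T \<Longrightarrow> continuous_on UNIV (\<lambda>x. psi (den T t x / d))"
  by (intro continuous_on_compose2[OF continuous_psi] continuous_on_divide den_cont continuous_on_const) auto

context panel begin

lemma weak_C:
  assumes T: "T \<ge> 4" and g: "centered_mvnormal P X T (Lam rho)" and sig: "sig > 0"
  shows "weak_conv_m (\<lambda>N. distr M borel (statC T (panelY mu delta T sig eps) N)) (distr P borel (limC T sig X))"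
proof -
  interpret Pp: prob_space P using g unfolding centered_mvnormal_def by blast
  have e1: "statC T (panelY mu delta T sig eps) N = (\<lambda>\<omega>. gC T sig (Vv N \<omega>))" for N
    using T sig by (intro ext statC_eq) auto
  have e2: "limC T sig X = (\<lambda>\<omega>. gC T sig (Gv T X \<omega>))" using T by (intro ext limC_eq) auto
  have gc: "continuous_on UNIV (gC T sig)" using T by (intro gC_cont) auto
  have gm: "gC T sig \<in> borel_measurable borel" by (rule borel_measurable_continuous_onI[OF gc])
  have m1: "(\<lambda>\<omega>. gC T sig (Vv N \<omega>)) \<in> borel_measurable M" for N
    using Vv_meas gm by (rule measurable_compose)
  have m2: "(\<lambda>\<omega>. gC T sig (Gv T X \<omega>)) \<in> borel_measurable P"
    using Gv_meas[OF g] gm by (rule measurable_compose)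
  show ?thesis unfolding e1 e2
  proof (rule integral_bdd_continuous_conv_imp_weak_conv)
    show "real_distribution (distr M borel (\<lambda>\<omega>. gC T sig (Vv N \<omega>)))" for N using m1 by simp
    show "real_distribution (distr P borel (\<lambda>\<omega>. gC T sig (Gv T X \<omega>)))" using m2 by simp
    fix f :: "real \<Rightarrow> real" assume fc: "\<And>x. isCont f x" and fb: "\<And>x. \<bar>f x\<bar> \<le> 1"
    have fm: "f \<in> borel_measurable borel" by (rule isCont_meas[OF fc])
    have "(\<lambda>N. \<integral>\<omega>. f (gC T sig (Vv N \<omega>)) \<partial>M) \<longlonglongrightarrow> (\<integral>\<omega>. f (gC T sig (Gv T X \<omega>)) \<partial>P)"
      using T by (intro MV_panel[OF _ g cont_comp_isCont[OF fc gc], where B=1] fb) auto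
    then show "(\<lambda>N. integral\<^sup>L (distr M borel (\<lambda>\<omega>. gC T sig (Vv N \<omega>))) f) \<longlonglongrightarrow>
               integral\<^sup>L (distr P borel (\<lambda>\<omega>. gC T sig (Gv T X \<omega>))) f"
      using m1 m2 fm by (simp add: integral_distr)
  qed
qed

end

context panel begin

lemma psi_tail0:
  assumes Pp: "prob_space P" and Zm: "Z \<in> borel_measurable P" and nz: "AE \<omega> in P. Z \<omega> > 0"
  shows "(\<lambda>k. \<integral>\<omega>. psi (Z \<omega> / (1 / (real k + 1))) \<partial>P) \<longlonglongrightarrow> 0"
proof -
  interpret Pp: prob_space P by fact
  have "(\<lambda>k. \<integral>\<omega>. psi (Z \<omega> / (1 / (real k + 1))) \<partial>P) \<longlonglongrightarrow> (\<integral>\<omega>. 0 \<partial>P)"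
  proof (rule integral_dominated_convergence[where w="\<lambda>_. 1"])
    show "AE \<omega> in P. (\<lambda>k. psi (Z \<omega> / (1 / (real k + 1)))) \<longlonglongrightarrow> 0"
      using nz
    proof eventually_elim
      case (elim \<omega>)
      have "eventually (\<lambda>k. psi (Z \<omega> / (1 / (real k + 1))) = 0) sequentially"
      proof (rule eventually_sequentiallyI[of "nat \<lceil>2 / Z \<omega>\<rceil>"])
        fix k assume "nat \<lceil>2 / Z \<omega>\<rceil> \<le> k"
        then have "2 / Z \<omega> \<le> real k + 1" by linarith
        then have "2 \<le> Z \<omega> * (real k + 1)" using elim by (simp add: field_simps)
        then have "\<bar>Z \<omega> / (1 / (real k + 1))\<bar> \<ge> 2" using elim by simp
        then show "psi (Z \<omega> / (1 / (real k + 1))) = 0" by (rule psi_zero)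
      qed
      then show ?case by (rule tendsto_eventually)
    qed
    show "AE \<omega> in P. norm (psi (Z \<omega> / (1 / (real k + 1)))) \<le> 1" for k
      using psi_ge0 psi_le1 by (intro AE_I2) (simp add: abs_le_iff)
  qed (use Zm in auto)
  then show ?thesis by simp
qed

lemma weak_R:
  assumes T: "T \<ge> 4" and g: "centered_mvnormal P X T (Lam rho)" and sig: "sig > 0"
  shows "weak_conv_m (\<lambda>N. distr M borel (statR T (panelY mu delta T sig eps) N)) (distr P borel (limR T X))"
proof -
  interpret Pp: prob_space P using g unfolding centered_mvnormal_def by blast
  have PP: "prob_space P" by (rule Pp.prob_space_axioms)
  have MM: "prob_space M" by (rule prob_space_axioms)
  have e1: "statR T (panelY mu delta T sig eps) N = (\<lambda>\<omega>. gR T (Vv N \<omega>))" for N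
    using T sig by (intro ext statR_eq) auto
  have e2: "limR T X = (\<lambda>\<omega>. gR T (Gv T X \<omega>))" using T by (intro ext limR_eq) auto
  have gm: "gR T \<in> borel_measurable borel" using T by (rule gR_meas)
  have Gm: "Gv T X \<in> borel_measurable P" by (rule Gv_meas[OF g])
  have m1: "(\<lambda>\<omega>. gR T (Vv N \<omega>)) \<in> borel_measurable M" for N
    using Vv_meas gm by (rule measurable_compose)
  have m2: "(\<lambda>\<omega>. gR T (Gv T X \<omega>)) \<in> borel_measurable P"
    using Gm gm by (rule measurable_compose)
  show ?thesis unfolding e1 e2
  proof (rule integral_bdd_continuous_conv_imp_weak_conv)
    show "real_distribution (distr M borel (\<lambda>\<omega>. gR T (Vv N \<omega>)))" for N using m1 by simp
    show "real_distribution (distr P borel (\<lambda>\<omega>. gR T (Gv T X \<omega>)))" using m2 by simp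
    fix f :: "real \<Rightarrow> real" assume fc: "\<And>x. isCont f x" and fb: "\<And>x. \<bar>f x\<bar> \<le> 1"
    have fm: "f \<in> borel_measurable borel" by (rule isCont_meas[OF fc])
    have fgm: "(\<lambda>x. f (gR T x)) \<in> borel_measurable borel" using gm fm by (rule measurable_compose)
    have conv: "(\<lambda>N. \<integral>\<omega>. f (gR T (Vv N \<omega>)) \<partial>M) \<longlonglongrightarrow> (\<integral>\<omega>. f (gR T (Gv T X \<omega>)) \<partial>P)"
    proof (cases "rho 1 = 1")
      case True
      have "(\<integral>\<omega>. f (gR T (Vv N \<omega>)) \<partial>M) = (\<integral>\<omega>. f 0 \<partial>M)" for N
      proof (rule integral_cong_AE)
        show "(\<lambda>\<omega>. f (gR T (Vv N \<omega>))) \<in> borel_measurable M" using m1 fm by (rule measurable_compose)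
        show "AE \<omega> in M. f (gR T (Vv N \<omega>)) = f 0" using caseA_M[OF T True, of N] by eventually_elim simp
      qed simp
      moreover have "(\<integral>\<omega>. f (gR T (Gv T X \<omega>)) \<partial>P) = (\<integral>\<omega>. f 0 \<partial>P)"
      proof (rule integral_cong_AE)
        show "(\<lambda>\<omega>. f (gR T (Gv T X \<omega>))) \<in> borel_measurable P" using m2 fm by (rule measurable_compose)
        show "AE \<omega> in P. f (gR T (Gv T X \<omega>)) = f 0" using caseA_P[OF T True g] by eventually_elim simp
      qed simp
      ultimately show ?thesis by (simp add: prob_space Pp.prob_space)
    next
      case False
      define d where "d k = 1 / (real k + 1)" for k :: nat
      have d: "d k > 0" for k by (simp add: d_def)
      have gRdc: "continuous_on UNIV (gRd T (d k))" for k using d T by (rule gRd_cont)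
      have gRdm: "(\<lambda>x. f (gRd T (d k) x)) \<in> borel_measurable borel" for k
        by (rule borel_measurable_continuous_onI[OF cont_comp_isCont[OF fc gRdc]])
      have pdc: "continuous_on UNIV (\<lambda>x. psi (den T t x / d k))" if "t \<in> {2..T-2}" for t k
        using that T d by (intro psi_den_cont) auto
      have pdm: "(\<lambda>x. psi (den T t x / d k)) \<in> borel_measurable borel" if "t \<in> {2..T-2}" for t k
        by (rule borel_measurable_continuous_onI[OF pdc[OF that]])
      have psib: "\<bar>psi y\<bar> \<le> 1" for y using psi_ge0 psi_le1 by (simp add: abs_le_iff)
      show ?thesis
      proof (rule approx_lim[where b="\<lambda>k N. \<integral>\<omega>. f (gRd T (d k) (Vv N \<omega>)) \<partial>M"
                               and b'="\<lambda>k. \<integral>\<omega>. f (gRd T (d k) (Gv T X \<omega>)) \<partial>P"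
                               and c="\<lambda>k N. 2 * (\<Sum>t\<in>{2..T-2}. \<integral>\<omega>. psi (den T t (Vv N \<omega>) / d k) \<partial>M)"
                               and c'="\<lambda>k. 2 * (\<Sum>t\<in>{2..T-2}. \<integral>\<omega>. psi (den T t (Gv T X \<omega>) / d k) \<partial>P)"])
        fix k
        show "(\<lambda>N. \<integral>\<omega>. f (gRd T (d k) (Vv N \<omega>)) \<partial>M) \<longlonglongrightarrow> (\<integral>\<omega>. f (gRd T (d k) (Gv T X \<omega>)) \<partial>P)"
          using T by (intro MV_panel[OF _ g cont_comp_isCont[OF fc gRdc], where B=1] fb) auto
        show "(\<lambda>N. 2 * (\<Sum>t\<in>{2..T-2}. \<integral>\<omega>. psi (den T t (Vv N \<omega>) / d k) \<partial>M)) \<longlonglongrightarrow>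
              2 * (\<Sum>t\<in>{2..T-2}. \<integral>\<omega>. psi (den T t (Gv T X \<omega>) / d k) \<partial>P)"
        proof (intro tendsto_mult_left tendsto_sum)
          fix t assume t: "t \<in> {2..T-2}"
          show "(\<lambda>N. \<integral>\<omega>. psi (den T t (Vv N \<omega>) / d k) \<partial>M) \<longlonglongrightarrow> (\<integral>\<omega>. psi (den T t (Gv T X \<omega>) / d k) \<partial>P)"
            using T by (intro MV_panel[OF _ g pdc[OF t], where B=1] psib) auto
        qed
      next
        fix k N
        show "\<bar>(\<integral>\<omega>. f (gR T (Vv N \<omega>)) \<partial>M) - (\<integral>\<omega>. f (gRd T (d k) (Vv N \<omega>)) \<partial>M)\<bar>
              \<le> 2 * (\<Sum>t\<in>{2..T-2}. \<integral>\<omega>. psi (den T t (Vv N \<omega>) / d k) \<partial>M)"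
        proof (rule int_diff_bound[OF MM])
          show "integrable M (\<lambda>\<omega>. f (gR T (Vv N \<omega>)))" by (rule bdd_integrable[OF MM Vv_meas fgm fb])
          show "integrable M (\<lambda>\<omega>. f (gRd T (d k) (Vv N \<omega>)))" by (rule bdd_integrable[OF MM Vv_meas gRdm fb])
          show "integrable M (\<lambda>\<omega>. psi (den T t (Vv N \<omega>) / d k))" if "t \<in> {2..T-2}" for t
            by (rule bdd_integrable[OF MM Vv_meas pdm[OF that] psib])
          show "\<bar>f (gR T x) - f (gRd T (d k) x)\<bar> \<le> 2 * (\<Sum>t\<in>{2..T-2}. psi (den T t x / d k))" for x
            by (rule gR_bound[OF d T fb])
        qed simp
      next
        fix k
        show "\<bar>(\<integral>\<omega>. f (gR T (Gv T X \<omega>)) \<partial>P) - (\<integral>\<omega>. f (gRd T (d k) (Gv T X \<omega>)) \<partial>P)\<bar>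
              \<le> 2 * (\<Sum>t\<in>{2..T-2}. \<integral>\<omega>. psi (den T t (Gv T X \<omega>) / d k) \<partial>P)"
        proof (rule int_diff_bound[OF PP])
          show "integrable P (\<lambda>\<omega>. f (gR T (Gv T X \<omega>)))" by (rule bdd_integrable[OF PP Gm fgm fb])
          show "integrable P (\<lambda>\<omega>. f (gRd T (d k) (Gv T X \<omega>)))" by (rule bdd_integrable[OF PP Gm gRdm fb])
          show "integrable P (\<lambda>\<omega>. psi (den T t (Gv T X \<omega>) / d k))" if "t \<in> {2..T-2}" for t
            by (rule bdd_integrable[OF PP Gm pdm[OF that] psib])
          show "\<bar>f (gR T x) - f (gRd T (d k) x)\<bar> \<le> 2 * (\<Sum>t\<in>{2..T-2}. psi (den T t x / d k))" for x
            by (rule gR_bound[OF d T fb])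
        qed simp
      next
        have "(\<lambda>k. 2 * (\<Sum>t\<in>{2..T-2}. \<integral>\<omega>. psi (den T t (Gv T X \<omega>) / d k) \<partial>P)) \<longlonglongrightarrow> 2 * (\<Sum>t\<in>{2..T-2}. 0)"
        proof (intro tendsto_mult_left tendsto_sum)
          fix t assume t: "t \<in> {2..T-2}"
          have dm: "(\<lambda>\<omega>. den T t (Gv T X \<omega>)) \<in> borel_measurable P"
            using Gm borel_measurable_continuous_onI[OF den_cont] t T by (intro measurable_compose[OF Gm]) auto
          have "AE \<omega> in P. den T t (Gv T X \<omega>) > 0"
            using caseB_P[OF T False g t]
          proof eventually_elim
            case (elim \<omega>)
            moreover have "den T t (Gv T X \<omega>) \<ge> 0" using t T by (intro den_nonneg) auto
            ultimately show ?case by linarith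
          qed
          from psi_tail0[OF PP dm this]
          show "(\<lambda>k. \<integral>\<omega>. psi (den T t (Gv T X \<omega>) / d k) \<partial>P) \<longlonglongrightarrow> 0" by (simp add: d_def)
        qed
        then show "(\<lambda>k. 2 * (\<Sum>t\<in>{2..T-2}. \<integral>\<omega>. psi (den T t (Gv T X \<omega>) / d k) \<partial>P)) \<longlonglongrightarrow> 0" by simp
      qed
    qed
    then show "(\<lambda>N. integral\<^sup>L (distr M borel (\<lambda>\<omega>. gR T (Vv N \<omega>))) f) \<longlonglongrightarrow>
               integral\<^sup>L (distr P borel (\<lambda>\<omega>. gR T (Gv T X \<omega>))) f"
      using m1 m2 fm by (simp add: integral_distr)
  qed
qed

end

theorem theorem1:
  fixes M :: "'a measure" and eps :: "nat \<Rightarrow> nat \<Rightarrow> 'a \<Rightarrow> real"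
    and T :: nat and sig :: real and mu delta :: "nat \<Rightarrow> real"
    and rho :: "nat \<Rightarrow> real"
    and P :: "'b measure" and X :: "nat \<Rightarrow> 'b \<Rightarrow> real"
  assumes "prob_space M"
    and T4: "T \<ge> 4"
    and sig_pos: "sig > 0"
    and meas: "\<And>i t. i \<ge> 1 \<Longrightarrow> t \<in> {1..T} \<Longrightarrow> eps i t \<in> borel_measurable M"
    and indep: "prob_space.indep_vars M (\<lambda>_. PiM {1..T} (\<lambda>_. borel))
                  (\<lambda>i \<omega>. \<lambda>t\<in>{1..T}. eps i t \<omega>) {1..}"
    and ident: "\<And>i j. i \<ge> 1 \<Longrightarrow> j \<ge> 1 \<Longrightarrow>
                  distr M (PiM {1..T} (\<lambda>_. borel)) (\<lambda>\<omega>. \<lambda>t\<in>{1..T}. eps i t \<omega>) =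
                  distr M (PiM {1..T} (\<lambda>_. borel)) (\<lambda>\<omega>. \<lambda>t\<in>{1..T}. eps j t \<omega>)"
    and sq_int: "\<And>i t. i \<ge> 1 \<Longrightarrow> t \<in> {1..T} \<Longrightarrow> integrable M (\<lambda>\<omega>. (eps i t \<omega>)\<^sup>2)"
    and mean0: "\<And>i t. i \<ge> 1 \<Longrightarrow> t \<in> {1..T} \<Longrightarrow> (\<integral>\<omega>. eps i t \<omega> \<partial>M) = 0"
    and var1: "\<And>i t. i \<ge> 1 \<Longrightarrow> t \<in> {1..T} \<Longrightarrow> prob_space.variance M (eps i t) = 1"
    and autocov: "\<And>i s k. i \<ge> 1 \<Longrightarrow> 1 \<le> s \<Longrightarrow> s + k \<le> T \<Longrightarrow>
                  (\<integral>\<omega>. (eps i s \<omega> - (\<integral>x. eps i s x \<partial>M)) * (eps i (s + k) \<omega> - (\<integral>x. eps i (s + k) x \<partial>M)) \<partial>M) = rho k"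
    and gauss: "centered_mvnormal P X T (Lam rho)"
  shows "weak_conv_m (\<lambda>N. distr M borel (statC T (panelY mu delta T sig eps) N))
                     (distr P borel (limC T sig X))
       \<and> weak_conv_m (\<lambda>N. distr M borel (statR T (panelY mu delta T sig eps) N))
                     (distr P borel (limR T X))"
proof -
  have pl: "panel M eps T rho"
    unfolding panel_def panel_axioms_def
    using assms(1) meas indep ident sq_int mean0 var1 autocov by blast
  interpret panel M eps T rho by (rule pl)
  show ?thesis
    using weak_C[OF T4 gauss sig_pos, of mu delta] weak_R[OF T4 gauss sig_pos, of mu delta] by blast
qed

end
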